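(* There is an absolute constant $C$ such that for every finite graph $G$, \[\mathrm{rw}(G)\le 3\,\mathrm{fw}_\infty(G)+1\le C\cdot 2^{\mathrm{rw}(G)}+C.\] In particular, a class $\mathcal C$ of graphs has bounded rank-width if and only if $\sup_{G\in\mathcal C}\mathrm{fw}_\infty(G)<\infty$.
   Context: Graphs are finite, simple, undirected. For a bipartition $V(G)=A\uplus B$, the cut-rank $\mathrm{rk}_G(A,B)$ is the rank over the two-element field of the $A\times B$ $0/1$ matrix whose $(a,b)$ entry is $1$ iff $ab\in E(G)$. The rank-width $\mathrm{rw}(G)$ is the least $k$ such that there is a tree whose inner nodes have degree at most $3$ and whose leaves are the vertices of $G$ such that for every tree edge $e$, the bipartition of $V(G)$ into leaves on the two sides of $e$ has cut-rank at most $k$ (graphs with at most one vertex have rank-width $0$). Flipping sets $X,Y$ inverts adjacency of all pairs of distinct $x\in X,y\in Y$; a $k$-flip of $G$ is obtained by choosing a partition $\mathcal P$ of $V(G)$ with at most $k$ parts and flipping some pairs of (possibly equal) parts. Flipper game of radius $\infty$ and width $k$: $G_0=G$, runner chooses $v_0$; in round $i\ge1$ the flipper announces a $k$-flip $G_i$ of $G$, and the runner moves from $v_{i-1}$ to any vertex $v_i$ in the same connected component of $G_{i-1}$; the flipper wins if $v_i$ is isolated in $G_i$. $\mathrm{fw}_\infty(G)$ is the least $k$ for which the flipper has a winning strategy. *)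

theory Defs
  imports Complex_Main "HOL-Library.Disjoint_Sets"
begin

definition graph :: "'a set \<Rightarrow> ('a \<Rightarrow> 'a \<Rightarrow> bool) \<Rightarrow> bool" where
  "graph V E \<longleftrightarrow> finite V \<and> (\<forall>x y. E x y \<longrightarrow> x \<in> V \<and> y \<in> V)
     \<and> (\<forall>x y. E x y \<longrightarrow> E y x) \<and> (\<forall>x. \<not> E x x)"

text \<open>Rows S (indexed by vertices of A) of the A x B adjacency matrix are linearly
independent over GF(2): no nonempty subset of them sums to zero.\<close>
definition gf2_indep :: "('a \<Rightarrow> 'a \<Rightarrow> bool) \<Rightarrow> 'a set \<Rightarrow> 'a set \<Rightarrow> bool" where
  "gf2_indep E S B \<longleftrightarrow>
     (\<forall>S'. S' \<subseteq> S \<longrightarrow> S' \<noteq> {} \<longrightarrow> (\<exists>b\<in>B. odd (card {a\<in>S'. E a b})))"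

definition cutrank :: "('a \<Rightarrow> 'a \<Rightarrow> bool) \<Rightarrow> 'a set \<Rightarrow> 'a set \<Rightarrow> nat" where
  "cutrank E A B = Max {card S | S. S \<subseteq> A \<and> gf2_indep E S B}"

definition del_edge :: "('b \<Rightarrow> 'b \<Rightarrow> bool) \<Rightarrow> 'b \<Rightarrow> 'b \<Rightarrow> 'b \<Rightarrow> 'b \<Rightarrow> bool" where
  "del_edge T x y = (\<lambda>a b. T a b \<and> {a, b} \<noteq> {x, y})"

definition is_tree :: "'b set \<Rightarrow> ('b \<Rightarrow> 'b \<Rightarrow> bool) \<Rightarrow> bool" where
  "is_tree N T \<longleftrightarrow> finite N \<and> N \<noteq> {} \<and> graph N T
     \<and> (\<forall>x\<in>N. \<forall>y\<in>N. T\<^sup>*\<^sup>* x y)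
     \<and> (\<forall>x y. T x y \<longrightarrow> \<not> (del_edge T x y)\<^sup>*\<^sup>* x y)"

definition tdeg :: "('b \<Rightarrow> 'b \<Rightarrow> bool) \<Rightarrow> 'b \<Rightarrow> nat" where
  "tdeg T x = card {y. T x y}"

definition rank_decomp ::
  "'a set \<Rightarrow> ('a \<Rightarrow> 'a \<Rightarrow> bool) \<Rightarrow> nat \<Rightarrow> nat set \<Rightarrow> (nat \<Rightarrow> nat \<Rightarrow> bool) \<Rightarrow> ('a \<Rightarrow> nat) \<Rightarrow> bool" where
  "rank_decomp V E k N T L \<longleftrightarrow> is_tree N T
     \<and> (\<forall>x\<in>N. tdeg T x \<noteq> 1 \<longrightarrow> tdeg T x \<le> 3)
     \<and> bij_betw L V {x\<in>N. tdeg T x = 1}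
     \<and> (\<forall>u w. T u w \<longrightarrow>
          (let A = {v\<in>V. (del_edge T u w)\<^sup>*\<^sup>* u (L v)} in cutrank E A (V - A) \<le> k))"

definition rw :: "'a set \<Rightarrow> ('a \<Rightarrow> 'a \<Rightarrow> bool) \<Rightarrow> nat" where
  "rw V E = (if card V \<le> 1 then 0
             else (LEAST k. \<exists>N T L. rank_decomp V E k N T L))"

definition kflip :: "nat \<Rightarrow> 'a set \<Rightarrow> ('a \<Rightarrow> 'a \<Rightarrow> bool) \<Rightarrow> ('a \<Rightarrow> 'a \<Rightarrow> bool) \<Rightarrow> bool" where
  "kflip k V E H \<longleftrightarrow> (\<exists>P F. partition_on V P \<and> card P \<le> k \<and> (\<forall>X Y. F X Y = F Y X)
     \<and> H = (\<lambda>x y. x \<in> V \<and> y \<in> V \<and> x \<noteq> y \<and>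
               (E x y \<noteq> (\<exists>X\<in>P. \<exists>Y\<in>P. x \<in> X \<and> y \<in> Y \<and> F X Y))))"

text \<open>Flipper strategy: maps the history of runner positions [v_0,...,v_(i-1)] to the
announced k-flip G_i.  Graph at stage j of a play v.\<close>
definition stage :: "('a \<Rightarrow> 'a \<Rightarrow> bool) \<Rightarrow> ('a list \<Rightarrow> 'a \<Rightarrow> 'a \<Rightarrow> bool) \<Rightarrow> (nat \<Rightarrow> 'a) \<Rightarrow> nat \<Rightarrow> 'a \<Rightarrow> 'a \<Rightarrow> bool" where
  "stage E \<sigma> v j = (if j = 0 then E else \<sigma> (map v [0..<j]))"

definition flipper_wins :: "nat \<Rightarrow> 'a set \<Rightarrow> ('a \<Rightarrow> 'a \<Rightarrow> bool) \<Rightarrow> bool" where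
  "flipper_wins k V E \<longleftrightarrow> (\<exists>\<sigma>. (\<forall>h. kflip k V E (\<sigma> h)) \<and>
     (\<forall>v :: nat \<Rightarrow> 'a. v 0 \<in> V \<and> (\<forall>j. (stage E \<sigma> v j)\<^sup>*\<^sup>* (v j) (v (Suc j)))
        \<longrightarrow> (\<exists>i\<ge>1. \<not> (\<exists>u. stage E \<sigma> v i (v i) u))))"

definition fw :: "'a set \<Rightarrow> ('a \<Rightarrow> 'a \<Rightarrow> bool) \<Rightarrow> nat" where
  "fw V E = (LEAST k. flipper_wins k V E)"

end

theory Submission
  imports Defs
begin

definition ind :: "bool \<Rightarrow> nat" where "ind b = (if b then 1 else 0)"

lemma card_filter_sum: "finite D \<Longrightarrow> card {a\<in>D. P a} = (\<Sum>a\<in>D. ind (P a))"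
  by (simp add: ind_def sum.If_cases Int_def)

lemma even_sum_cong: "finite D \<Longrightarrow> (\<And>a. a\<in>D \<Longrightarrow> even (g a) = even (h a)) \<Longrightarrow> even (sum g D :: nat) = even (sum h D)"
  by (induction D rule: finite_induct) auto

lemma indep_empty: "gf2_indep E {} B"
  by (simp add: gf2_indep_def)

lemma cutrank_set_fin: "finite A \<Longrightarrow> finite {card S |S. S \<subseteq> A \<and> gf2_indep E S B}"
proof -
  assume "finite A"
  have "{card S |S. S \<subseteq> A \<and> gf2_indep E S B} \<subseteq> card ` Pow A" by auto
  thus ?thesis using \<open>finite A\<close> finite_subset by blast
qed

lemma cutrank_le:
  assumes "finite A" "\<And>S. S\<subseteq>A \<Longrightarrow> gf2_indep E S B \<Longrightarrow> card S \<le> n"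
  shows "cutrank E A B \<le> n"
  unfolding cutrank_def
  using assms cutrank_set_fin[OF assms(1), of E B] indep_empty[of E B]
  by (subst Max_le_iff) auto

lemma cutrank_ge:
  assumes "finite A" "S\<subseteq>A" "gf2_indep E S B"
  shows "card S \<le> cutrank E A B"
  unfolding cutrank_def
  using assms cutrank_set_fin[OF assms(1), of E B]
  by (intro Max_ge) auto

lemma cutrank_attained:
  assumes "finite A"
  shows "\<exists>S\<subseteq>A. gf2_indep E S B \<and> card S = cutrank E A B"
proof -
  have "cutrank E A B \<in> {card S |S. S \<subseteq> A \<and> gf2_indep E S B}"
    unfolding cutrank_def
    using cutrank_set_fin[OF assms(1), of E B] indep_empty[of E B]
    by (intro Max_in) auto
  thus ?thesis by auto
qed

lemma symdiff_parity:
  assumes "finite S1" "finite S2"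
  shows "even (card {a\<in>(S1 - S2) \<union> (S2 - S1). P a}) \<longleftrightarrow> (odd (card {a\<in>S1. P a}) \<longleftrightarrow> odd (card {a\<in>S2. P a}))"
proof -
  let ?X1 = "{a\<in>S1 - S2. P a}" and ?X2 = "{a\<in>S2 - S1. P a}" and ?Y = "{a\<in>S1 \<inter> S2. P a}"
  have f: "finite ?X1" "finite ?X2" "finite ?Y" using assms by auto
  have e1: "{a\<in>S1. P a} = ?X1 \<union> ?Y" by auto
  have e2: "{a\<in>S2. P a} = ?X2 \<union> ?Y" by auto
  have e3: "{a\<in>(S1 - S2) \<union> (S2 - S1). P a} = ?X1 \<union> ?X2" by auto
  have c1: "card {a\<in>S1. P a} = card ?X1 + card ?Y" unfolding e1 using f by (intro card_Un_disjoint) auto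
  have c2: "card {a\<in>S2. P a} = card ?X2 + card ?Y" unfolding e2 using f by (intro card_Un_disjoint) auto
  have c3: "card {a\<in>(S1 - S2) \<union> (S2 - S1). P a} = card ?X1 + card ?X2" unfolding e3 using f by (intro card_Un_disjoint) auto
  show ?thesis unfolding c1 c2 c3 by auto
qed

lemma cutrank_le_span:
  assumes finA: "finite A" and finW: "finite W"
  and span: "\<And>c. c\<in>B \<Longrightarrow> \<exists>f::'a\<Rightarrow>nat. \<forall>t\<in>A. (E t c \<longleftrightarrow> odd (\<Sum>q\<in>W. f q * ind (E t q)))"
  shows "cutrank E A B \<le> card W"
proof (rule cutrank_le[OF finA])
  fix S assume S: "S \<subseteq> A" "gf2_indep E S B"
  show "card S \<le> card W"
  proof (rule ccontr)
    assume "\<not> ?thesis"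
    hence lt: "card W < card S" by simp
    have finS: "finite S" using S finA finite_subset by blast
    define g where "g S' = {q\<in>W. odd (card {a\<in>S'. E a q})}" for S'
    have gi: "g ` Pow S \<subseteq> Pow W" by (auto simp: g_def)
    have "\<not> inj_on g (Pow S)"
    proof
      assume "inj_on g (Pow S)"
      hence "card (Pow S) \<le> card (Pow W)" using card_inj_on_le[OF _ gi] finW by simp
      hence "(2::nat) ^ card S \<le> 2 ^ card W" using finS finW by (simp add: card_Pow)
      thus False using lt by simp
    qed
    then obtain S1 S2 where s12: "S1 \<subseteq> S" "S2 \<subseteq> S" "S1 \<noteq> S2" "g S1 = g S2"
      unfolding inj_on_def by auto
    define D where "D = (S1 - S2) \<union> (S2 - S1)"
    have DS: "D \<subseteq> S" using s12 by (auto simp: D_def)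
    have Dne: "D \<noteq> {}" using s12 by (auto simp: D_def)
    have fin12: "finite S1" "finite S2" using s12(1,2) finS by (auto intro: finite_subset)
    have finD: "finite D" using DS finS finite_subset by blast
    have evq: "even (card {a\<in>D. E a q})" if "q \<in> W" for q
    proof -
      have "(q \<in> g S1) = (q \<in> g S2)" using s12 by simp
      thus ?thesis using that symdiff_parity[OF fin12, of "\<lambda>a. E a q"] by (auto simp: g_def D_def)
    qed
    obtain b where b: "b\<in>B" "odd (card {a\<in>D. E a b})"
      using S(2) DS Dne unfolding gf2_indep_def by blast
    obtain f where f: "\<forall>t\<in>A. (E t b \<longleftrightarrow> odd (\<Sum>q\<in>W. f q * ind (E t q)))"
      using span[OF b(1)] by blast
    have "even (\<Sum>a\<in>D. ind (E a b)) = even (\<Sum>a\<in>D. \<Sum>q\<in>W. f q * ind (E a q))"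
    proof (rule even_sum_cong[OF finD])
      fix a assume "a \<in> D"
      hence "a \<in> A" using DS S by auto
      thus "even (ind (E a b)) = even (\<Sum>q\<in>W. f q * ind (E a q))" using f by (auto simp: ind_def)
    qed
    also have "(\<Sum>a\<in>D. \<Sum>q\<in>W. f q * ind (E a q)) = (\<Sum>q\<in>W. f q * card {a\<in>D. E a q})"
      by (subst sum.swap) (simp add: sum_distrib_left card_filter_sum[OF finD])
    finally have "even (card {a\<in>D. E a b}) = even (\<Sum>q\<in>W. f q * card {a\<in>D. E a q})"
      by (simp add: card_filter_sum[OF finD])
    moreover have "even (\<Sum>q\<in>W. f q * card {a\<in>D. E a q})"
      by (rule dvd_sum) (simp add: evq)
    ultimately show False using b(2) by simp
  qed
qed

lemma row_span:
  assumes finA: "finite A" and S: "S \<subseteq> A" "gf2_indep E S B" "card S = cutrank E A B"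
    and a: "a \<in> A"
  shows "\<exists>S'\<subseteq>S. \<forall>b\<in>B. (E a b \<longleftrightarrow> odd (card {s\<in>S'. E s b}))"
proof (cases "a \<in> S")
  case True
  show ?thesis by (rule exI[of _ "{a}"]) (auto simp: True Collect_conv_if)
next
  case False
  have finS: "finite S" using S(1) finA finite_subset by blast
  have "card (insert a S) = card S + 1" using False finS by simp
  hence "\<not> gf2_indep E (insert a S) B"
    using cutrank_ge[OF finA, of "insert a S" E B] S a by auto
  then obtain S'' where S'': "S'' \<subseteq> insert a S" "S'' \<noteq> {}" "\<forall>b\<in>B. even (card {s\<in>S''. E s b})"
    unfolding gf2_indep_def by auto
  have aS'': "a \<in> S''"
  proof (rule ccontr)
    assume "a \<notin> S''"
    hence "S'' \<subseteq> S" using S''(1) by auto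
    thus False using S(2) S'' unfolding gf2_indep_def by auto
  qed
  define S' where "S' = S'' - {a}"
  have S'S: "S' \<subseteq> S" using S''(1) by (auto simp: S'_def)
  have finS': "finite S'" using S'S finS finite_subset by blast
  have "E a b \<longleftrightarrow> odd (card {s\<in>S'. E s b})" if b: "b \<in> B" for b
  proof (cases "E a b")
    case True
    have "{s\<in>S''. E s b} = insert a {s\<in>S'. E s b}" using aS'' True by (auto simp: S'_def)
    moreover have "a \<notin> {s\<in>S'. E s b}" by (auto simp: S'_def)
    ultimately have "card {s\<in>S''. E s b} = Suc (card {s\<in>S'. E s b})" using finS' by simp
    thus ?thesis using S''(3) b True by auto
  next
    case False
    have "{s\<in>S''. E s b} = {s\<in>S'. E s b}" using aS'' False by (auto simp: S'_def)
    thus ?thesis using S''(3) b False by auto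
  qed
  thus ?thesis using S'S by blast
qed

lemma rows_card:
  assumes finA: "finite A"
  shows "card ((\<lambda>a. {b\<in>B. E a b}) ` A) \<le> 2 ^ cutrank E A B"
proof -
  obtain S where S: "S \<subseteq> A" "gf2_indep E S B" "card S = cutrank E A B"
    using cutrank_attained[OF finA] by blast
  have finS: "finite S" using S(1) finA finite_subset by blast
  define h where "h S' = {b\<in>B. odd (card {s\<in>S'. E s b})}" for S'
  have "(\<lambda>a. {b\<in>B. E a b}) ` A \<subseteq> h ` Pow S"
  proof
    fix x assume "x \<in> (\<lambda>a. {b\<in>B. E a b}) ` A"
    then obtain a where a: "a \<in> A" "x = {b\<in>B. E a b}" by blast
    obtain S' where "S' \<subseteq> S" "\<forall>b\<in>B. (E a b \<longleftrightarrow> odd (card {s\<in>S'. E s b}))"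
      using row_span[OF finA S a(1)] by blast
    hence "x = h S'" using a(2) by (auto simp: h_def)
    thus "x \<in> h ` Pow S" using \<open>S' \<subseteq> S\<close> by blast
  qed
  hence "card ((\<lambda>a. {b\<in>B. E a b}) ` A) \<le> card (h ` Pow S)"
    using finS by (intro card_mono) auto
  also have "\<dots> \<le> card (Pow S)" using finS by (intro card_image_le) auto
  also have "\<dots> = 2 ^ cutrank E A B" using finS S(3) by (simp add: card_Pow)
  finally show ?thesis .
qed

lemma cutrank_sym_le:
  assumes finA: "finite A" and finB: "finite B" and sym: "\<And>x y. E x y = E y x"
  shows "cutrank E B A \<le> cutrank E A B"
proof -
  obtain S where S: "S \<subseteq> A" "gf2_indep E S B" "card S = cutrank E A B"
    using cutrank_attained[OF finA] by blast
  have finS: "finite S" using S(1) finA finite_subset by blast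
  have "cutrank E B A \<le> card S"
  proof (rule cutrank_le_span[OF finB finS])
    fix c assume c: "c \<in> A"
    obtain S' where S': "S' \<subseteq> S" "\<forall>b\<in>B. (E c b \<longleftrightarrow> odd (card {s\<in>S'. E s b}))"
      using row_span[OF finA S c] by blast
    have "\<forall>t\<in>B. (E t c \<longleftrightarrow> odd (\<Sum>q\<in>S. ind (q \<in> S') * ind (E t q)))"
    proof
      fix t assume t: "t \<in> B"
      have "(\<Sum>q\<in>S. ind (q \<in> S') * ind (E t q)) = (\<Sum>q\<in>S. ind (q \<in> S' \<and> E q t))"
        by (intro sum.cong) (auto simp: ind_def sym)
      also have "\<dots> = card {q\<in>S. q \<in> S' \<and> E q t}" by (simp add: card_filter_sum[OF finS])
      also have "{q\<in>S. q \<in> S' \<and> E q t} = {s\<in>S'. E s t}" using S'(1) by auto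
      finally have eq: "(\<Sum>q\<in>S. ind (q \<in> S') * ind (E t q)) = card {s\<in>S'. E s t}" .
      have "E c t \<longleftrightarrow> odd (card {s\<in>S'. E s t})" using S'(2) t by blast
      moreover have "E t c = E c t" by (rule sym)
      ultimately show "E t c \<longleftrightarrow> odd (\<Sum>q\<in>S. ind (q \<in> S') * ind (E t q))"
        unfolding eq by simp
    qed
    thus "\<exists>f::'a\<Rightarrow>nat. \<forall>t\<in>B. (E t c \<longleftrightarrow> odd (\<Sum>q\<in>S. f q * ind (E t q)))"
      by (intro exI[of _ "\<lambda>q. ind (q \<in> S')"])
  qed
  thus ?thesis using S(3) by simp
qed

lemma cutrank_sym:
  assumes "finite A" "finite B" "\<And>x y. E x y = E y x"
  shows "cutrank E B A = cutrank E A B"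
  using cutrank_sym_le[OF assms] cutrank_sym_le[OF assms(2,1)] assms(3) by (simp add: le_antisym)

lemma cutrank_card_le: "finite A \<Longrightarrow> cutrank E A B \<le> card A"
  by (rule cutrank_le) (auto intro: card_mono)

definition spn :: "('a \<Rightarrow> 'a \<Rightarrow> bool) \<Rightarrow> 'a set \<Rightarrow> 'a set \<Rightarrow> 'a \<Rightarrow> bool" where
  "spn E A W c \<longleftrightarrow> (\<exists>f::'a\<Rightarrow>nat. \<forall>t\<in>A. (E t c \<longleftrightarrow> odd (\<Sum>q\<in>W. f q * ind (E t q))))"

lemma spn_mem:
  assumes "finite W" "r \<in> W" "\<forall>t\<in>A. E t c = E t r"
  shows "spn E A W c"
proof -
  have "\<forall>t\<in>A. (E t c \<longleftrightarrow> odd (\<Sum>q\<in>W. ind (q = r) * ind (E t q)))"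
  proof
    fix t assume "t \<in> A"
    have "(\<Sum>q\<in>W. ind (q = r) * ind (E t q)) = (\<Sum>q\<in>W. if q = r then ind (E t q) else 0)"
      by (intro sum.cong) (auto simp: ind_def)
    also have "\<dots> = ind (E t r)" using assms(1,2) by (simp add: sum.delta')
    finally show "E t c \<longleftrightarrow> odd (\<Sum>q\<in>W. ind (q = r) * ind (E t q))"
      using assms(3) \<open>t \<in> A\<close> by (simp add: ind_def)
  qed
  thus ?thesis unfolding spn_def by (intro exI[of _ "\<lambda>q. ind (q = r)"])
qed

lemma spn_mono_rows: "A' \<subseteq> A \<Longrightarrow> spn E A W c \<Longrightarrow> spn E A' W c"
  unfolding spn_def by blast

lemma spn_trans:
  assumes finW: "finite W" and finW': "finite W'"
    and all: "\<forall>q\<in>W. spn E A W' q" and c: "spn E A W c"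
  shows "spn E A W' c"
proof -
  obtain f where f: "\<forall>t\<in>A. (E t c \<longleftrightarrow> odd (\<Sum>q\<in>W. f q * ind (E t q)))"
    using c unfolding spn_def by blast
  have "\<forall>q\<in>W. \<exists>g::'a\<Rightarrow>nat. \<forall>t\<in>A. (E t q \<longleftrightarrow> odd (\<Sum>q'\<in>W'. g q' * ind (E t q')))"
    using all unfolding spn_def by blast
  then obtain g where g: "\<forall>q\<in>W. \<forall>t\<in>A. (E t q \<longleftrightarrow> odd (\<Sum>q'\<in>W'. g q q' * ind (E t q')))"
    by (auto dest!: bchoice)
  have "\<forall>t\<in>A. (E t c \<longleftrightarrow> odd (\<Sum>q'\<in>W'. (\<Sum>q\<in>W. f q * g q q') * ind (E t q')))"
  proof
    fix t assume t: "t \<in> A"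
    have "even (\<Sum>q\<in>W. f q * ind (E t q)) = even (\<Sum>q\<in>W. f q * (\<Sum>q'\<in>W'. g q q' * ind (E t q')))"
    proof (rule even_sum_cong[OF finW])
      fix q assume q: "q \<in> W"
      have "even (ind (E t q)) = even (\<Sum>q'\<in>W'. g q q' * ind (E t q'))"
        using g q t by (auto simp: ind_def)
      thus "even (f q * ind (E t q)) = even (f q * (\<Sum>q'\<in>W'. g q q' * ind (E t q')))"
        by simp
    qed
    also have "(\<Sum>q\<in>W. f q * (\<Sum>q'\<in>W'. g q q' * ind (E t q'))) = (\<Sum>q'\<in>W'. (\<Sum>q\<in>W. f q * g q q') * ind (E t q'))"
      by (simp add: sum_distrib_left sum_distrib_right mult.assoc sum.swap[of _ W])
    finally show "E t c \<longleftrightarrow> odd (\<Sum>q'\<in>W'. (\<Sum>q\<in>W. f q * g q q') * ind (E t q'))"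
      using f t by simp
  qed
  thus ?thesis unfolding spn_def by (intro exI[of _ "\<lambda>q'. \<Sum>q\<in>W. f q * g q q'"])
qed

locale grph =
  fixes V :: "'a set" and E :: "'a \<Rightarrow> 'a \<Rightarrow> bool"
  assumes G: "graph V E"
begin

lemma finV: "finite V" using G by (simp add: graph_def)
lemma Esym: "E x y = E y x" using G unfolding graph_def by blast
lemma EV: "E x y \<Longrightarrow> x \<in> V \<and> y \<in> V" using G unfolding graph_def by blast
lemma Eirr: "\<not> E x x" using G unfolding graph_def by blast

definition Sp :: "'a set \<Rightarrow> 'a set \<Rightarrow> bool" where
  "Sp T W \<longleftrightarrow> T \<subseteq> V \<and> W \<subseteq> V - T \<and> finite W \<and> (\<forall>c\<in>V - T. spn E T W c)"

lemma Sp_cr: "Sp T W \<Longrightarrow> cutrank E T (V - T) \<le> card W"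
  unfolding Sp_def spn_def
  by (rule cutrank_le_span) (auto intro: finite_subset[OF _ finV])

lemma Sp_V: "Sp V {}"
  by (simp add: Sp_def)

lemma Sp_peel:
  assumes "Sp T W" "v \<in> T"
  shows "Sp (T - {v}) (insert v W)"
  unfolding Sp_def
proof (intro conjI ballI)
  show "T - {v} \<subseteq> V" "insert v W \<subseteq> V - (T - {v})" "finite (insert v W)"
    using assms by (auto simp: Sp_def)
  fix c assume c: "c \<in> V - (T - {v})"
  have fin: "finite (insert v W)" using assms by (auto simp: Sp_def)
  show "spn E (T - {v}) (insert v W) c"
  proof (cases "c = v")
    case True
    thus ?thesis by (intro spn_mem[OF fin, of v]) auto
  next
    case False
    hence "c \<in> V - T" using c by auto
    hence s: "spn E (T - {v}) W c" using assms(1) spn_mono_rows[of "T - {v}" T] by (auto simp: Sp_def)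
    have "\<forall>q\<in>W. spn E (T - {v}) (insert v W) q"
      using fin by (auto intro: spn_mem)
    thus ?thesis using spn_trans[OF _ fin _ s] assms(1) by (auto simp: Sp_def)
  qed
qed

lemma part_unique:
  assumes "partition_on V P" "X \<in> P" "Y \<in> P" "x \<in> X" "x \<in> Y"
  shows "X = Y"
  using assms partition_onD2[OF assms(1)] unfolding disjoint_def by blast

lemma Sp_flip:
  assumes Sp: "Sp T W" and P: "partition_on V P" "card P \<le> k"
    and H: "H = (\<lambda>x y. x \<in> V \<and> y \<in> V \<and> x \<noteq> y \<and>
               (E x y \<noteq> (\<exists>X\<in>P. \<exists>Y\<in>P. x \<in> X \<and> y \<in> Y \<and> F X Y)))"
    and Z: "Z \<subseteq> V" "\<forall>u w. u \<in> Z \<longrightarrow> H u w \<longrightarrow> w \<in> Z"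
  shows "\<exists>R. R \<subseteq> V - Z \<and> card R \<le> k \<and> Sp (T \<inter> Z) ((W \<inter> Z) \<union> R)"
proof -
  have UP: "\<Union>P = V" using P(1) by (simp add: partition_on_def)
  have finP: "finite P" using finV UP finite_UnionD by auto
  define pt where "pt x = (THE X. X \<in> P \<and> x \<in> X)" for x
  have pt: "pt x \<in> P \<and> x \<in> pt x" if xV: "x \<in> V" for x
  proof -
    obtain X where "X \<in> P" "x \<in> X" using UP xV by blast
    have "pt x = X" unfolding pt_def
    proof (rule the_equality)
      show "X \<in> P \<and> x \<in> X" using \<open>X \<in> P\<close> \<open>x \<in> X\<close> by simp
      fix Y assume "Y \<in> P \<and> x \<in> Y"
      thus "Y = X" using part_unique[OF P(1) \<open>X \<in> P\<close> _ \<open>x \<in> X\<close>] by blast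
    qed
    thus ?thesis using \<open>X \<in> P\<close> \<open>x \<in> X\<close> by simp
  qed
  have pt_eq: "pt y = X" if "X \<in> P" "y \<in> X" for X y
  proof -
    have "y \<in> V" using that UP by blast
    hence "pt y \<in> P" "y \<in> pt y" using pt by blast+
    thus ?thesis using part_unique[OF P(1) _ that(1) _ that(2)] by blast
  qed
  have Ecross: "E t c = F (pt t) (pt c)" if "t \<in> Z" "c \<in> V - Z" for t c
  proof -
    have "\<not> H t c" using Z that by blast
    moreover have "t \<in> V" "c \<in> V" "t \<noteq> c" using Z that by auto
    ultimately have 1: "E t c = (\<exists>X\<in>P. \<exists>Y\<in>P. t \<in> X \<and> c \<in> Y \<and> F X Y)" unfolding H by simp
    have 2: "(\<exists>X\<in>P. \<exists>Y\<in>P. t \<in> X \<and> c \<in> Y \<and> F X Y) = F (pt t) (pt c)"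
    proof
      assume "\<exists>X\<in>P. \<exists>Y\<in>P. t \<in> X \<and> c \<in> Y \<and> F X Y"
      then obtain X Y where XY: "X \<in> P" "Y \<in> P" "t \<in> X" "c \<in> Y" "F X Y" by blast
      have "pt t = X" by (rule pt_eq[OF XY(1,3)])
      moreover have "pt c = Y" by (rule pt_eq[OF XY(2,4)])
      ultimately show "F (pt t) (pt c)" using XY(5) by simp
    next
      assume "F (pt t) (pt c)"
      thus "\<exists>X\<in>P. \<exists>Y\<in>P. t \<in> X \<and> c \<in> Y \<and> F X Y"
        using pt[OF \<open>t \<in> V\<close>] pt[OF \<open>c \<in> V\<close>] by blast
    qed
    show ?thesis using 1 2 by simp
  qed
  define rep where "rep X = (SOME r. r \<in> X - Z)" for X
  define R where "R = rep ` {X\<in>P. X - Z \<noteq> {}}"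
  have rep: "rep X \<in> X - Z" if ne: "X - Z \<noteq> {}" for X
  proof -
    obtain r where "r \<in> X - Z" using ne by blast
    thus ?thesis unfolding rep_def by (rule someI)
  qed
  have RZ: "R \<subseteq> V - Z"
  proof
    fix r assume "r \<in> R"
    then obtain X where X: "X \<in> P" "X - Z \<noteq> {}" "r = rep X" unfolding R_def by blast
    hence "r \<in> X - Z" using rep by blast
    thus "r \<in> V - Z" using X(1) UP by blast
  qed
  have cardR: "card R \<le> k"
  proof -
    have "card R \<le> card {X\<in>P. X - Z \<noteq> {}}" unfolding R_def by (rule card_image_le) (use finP in auto)
    also have "\<dots> \<le> card P" using finP by (intro card_mono) auto
    finally show ?thesis using P(2) by simp
  qed
  have finR: "finite R" unfolding R_def using finP by auto
  have finW: "finite W" using Sp by (simp add: Sp_def)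
  define W' where "W' = (W \<inter> Z) \<union> R"
  have finW': "finite W'" using finR finW by (simp add: W'_def)
  have outside: "spn E (T \<inter> Z) W' c" if c: "c \<in> V - Z" for c
  proof -
    have ne: "pt c - Z \<noteq> {}" using pt c by blast
    let ?r = "rep (pt c)"
    have "pt c \<in> {X\<in>P. X - Z \<noteq> {}}" using ne pt c by blast
    hence rR: "?r \<in> W'" unfolding W'_def R_def by blast
    have rc: "pt ?r = pt c" using rep[OF ne] pt c by (intro pt_eq) auto

    have rX: "?r \<in> pt c - Z" by (rule rep[OF ne])
    have "pt c \<in> P" using pt c by blast
    hence rZ: "?r \<in> V - Z" using rX UP by blast
    show ?thesis
    proof (rule spn_mem[OF finW' rR], intro ballI)
      fix t assume "t \<in> T \<inter> Z"
      hence tZ: "t \<in> Z" by simp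
      have "E t c = F (pt t) (pt c)" by (rule Ecross[OF tZ c])
      also have "\<dots> = F (pt t) (pt ?r)" using rc by simp
      also have "\<dots> = E t ?r" by (rule Ecross[OF tZ rZ, symmetric])
      finally show "E t c = E t ?r" .
    qed
  qed
  have "Sp (T \<inter> Z) W'"
    unfolding Sp_def
  proof (intro conjI ballI)
    show "T \<inter> Z \<subseteq> V" using Z by auto
    show "W' \<subseteq> V - T \<inter> Z" using Sp RZ unfolding W'_def Sp_def by auto
    show "finite W'" by (rule finW')
    fix c assume c: "c \<in> V - T \<inter> Z"
    show "spn E (T \<inter> Z) W' c"
    proof (cases "c \<in> Z")
      case False
      thus ?thesis using c outside by auto
    next
      case True
      hence "c \<in> V - T" using c by auto
      hence s: "spn E (T \<inter> Z) W c" using Sp spn_mono_rows[of "T \<inter> Z" T] by (auto simp: Sp_def)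
      have "\<forall>q\<in>W. spn E (T \<inter> Z) W' q"
      proof
        fix q assume q: "q \<in> W"
        show "spn E (T \<inter> Z) W' q"
        proof (cases "q \<in> Z")
          case True
          thus ?thesis using q finW' by (intro spn_mem[of W' q]) (auto simp: W'_def)
        next
          case False
          thus ?thesis using q Sp outside by (auto simp: Sp_def)
        qed
      qed
      thus ?thesis using spn_trans[OF finW finW' _ s] by blast
    qed
  qed
  thus ?thesis using RZ cardR unfolding W'_def by blast
qed

end

datatype 'a tr = Lf 'a | Nd "'a tr" "'a tr"

fun lvs :: "'a tr \<Rightarrow> 'a set" where
  "lvs (Lf v) = {v}"
| "lvs (Nd a b) = lvs a \<union> lvs b"

context grph begin

inductive dect :: "nat \<Rightarrow> 'a tr \<Rightarrow> bool" for K where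
  dLf: "v \<in> V \<Longrightarrow> dect K (Lf v)"
| dNd: "dect K a \<Longrightarrow> dect K b \<Longrightarrow> lvs a \<inter> lvs b = {} \<Longrightarrow>
        cutrank E (lvs a \<union> lvs b) (V - (lvs a \<union> lvs b)) \<le> K \<Longrightarrow> dect K (Nd a b)"

lemma kflip_sym:
  assumes "kflip k V E H" shows "H x y = H y x"
proof -
  obtain P F where PF: "\<forall>X Y. F X Y = F Y X"
    "H = (\<lambda>x y. x \<in> V \<and> y \<in> V \<and> x \<noteq> y \<and> (E x y \<noteq> (\<exists>X\<in>P. \<exists>Y\<in>P. x \<in> X \<and> y \<in> Y \<and> F X Y)))"
    using assms unfolding kflip_def by blast
  have "(\<exists>X\<in>P. \<exists>Y\<in>P. x \<in> X \<and> y \<in> Y \<and> F X Y) = (\<exists>X\<in>P. \<exists>Y\<in>P. y \<in> X \<and> x \<in> Y \<and> F X Y)"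
    using PF(1) by blast
  thus ?thesis unfolding PF(2) using Esym[of x y] by auto
qed

lemma kflip_V: "kflip k V E H \<Longrightarrow> H x y \<Longrightarrow> x \<in> V \<and> y \<in> V"
  unfolding kflip_def by auto

lemma rtranclp_sym:
  assumes "\<And>x y. H x y = H y x" "H\<^sup>*\<^sup>* x y" shows "H\<^sup>*\<^sup>* y x"
  using assms(2)
proof (induction rule: rtranclp_induct)
  case base thus ?case by simp
next
  case (step y z)
  have "H z y" using step(2) assms(1) by simp
  thus ?case using step(3) by (rule converse_rtranclp_into_rtranclp)
qed

lemma comp_sub:
  assumes "kflip k V E H" "x \<in> V" "H\<^sup>*\<^sup>* x y" shows "y \<in> V"
  using assms(3)
proof (induction rule: rtranclp_induct)
  case base thus ?case using assms(2) .
next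
  case (step y z) thus ?case using kflip_V[OF assms(1)] by blast
qed

lemma comp_eq:
  assumes "kflip k V E H" "H\<^sup>*\<^sup>* x y" shows "{z. H\<^sup>*\<^sup>* x z} = {z. H\<^sup>*\<^sup>* y z}"
proof -
  have "H\<^sup>*\<^sup>* y x" using rtranclp_sym[OF kflip_sym[OF assms(1)] assms(2)] .
  thus ?thesis using assms(2) by (auto intro: rtranclp_trans)
qed

lemma decomp_bal:
  assumes k1: "k \<ge> 1"
  and bal: "\<And>W. W \<subseteq> V \<Longrightarrow> card W = 2*k+1 \<Longrightarrow>
        \<exists>H. kflip k V E H \<and> (\<forall>x\<in>V. card (W \<inter> {y. H\<^sup>*\<^sup>* x y}) \<le> k)"
  shows "T \<noteq> {} \<Longrightarrow> Sp T W \<Longrightarrow> card W \<le> 2*k \<Longrightarrow> \<exists>t. dect (3*k+1) t \<and> lvs t = T"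
proof (induction "card T" arbitrary: T W rule: less_induct)
  case less
  have TV: "T \<subseteq> V" using less.prems(2) by (simp add: Sp_def)
  have finT: "finite T" using TV finV finite_subset by blast
  show ?case
  proof (cases "card T = 1")
    case True
    then obtain v where "T = {v}" using card_1_singletonE by blast
    thus ?thesis using TV by (intro exI[of _ "Lf v"]) (auto intro: dLf)
  next
    case False
    have "card T > 0" using finT less.prems(1) by (simp add: card_gt_0_iff)
    hence c2: "card T \<ge> 2" using False by simp
    obtain v where vT: "v \<in> T" using less.prems(1) by blast
    define T' where "T' = T - {v}"
    define W' where "W' = insert v W"
    have T'ne: "T' \<noteq> {}"
    proof
      assume "T' = {}"
      hence "T \<subseteq> {v}" unfolding T'_def by auto
      hence "card T \<le> 1" using card_mono[of "{v}" T] by simp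
      thus False using c2 by simp
    qed
    have SpT': "Sp T' W'" unfolding T'_def W'_def by (rule Sp_peel[OF less.prems(2) vT])
    have finW: "finite W" using less.prems(2) by (simp add: Sp_def)
    have cW': "card W' \<le> 2*k+1" unfolding W'_def using less.prems(3) finW card_insert_le
      by (simp add: card_insert_if)
    have cT': "card T' < card T" unfolding T'_def using vT finT c2 by (simp add: card_Diff1_less)
    have T'sub: "T' \<subseteq> T" unfolding T'_def by auto
    have "\<exists>t'. dect (3*k+1) t' \<and> lvs t' = T'"
    proof (cases "card W' \<le> 2*k")
      case True
      thus ?thesis using less.hyps[OF cT' T'ne SpT'] by blast
    next
      case False
      hence cW'eq: "card W' = 2*k+1" using cW' by simp
      have W'V: "W' \<subseteq> V" using SpT' by (auto simp: Sp_def)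
      obtain H where H: "kflip k V E H" "\<forall>x\<in>V. card (W' \<inter> {y. H\<^sup>*\<^sup>* x y}) \<le> k"
        using bal[OF W'V cW'eq] by blast
      obtain P F where PF: "partition_on V P" "card P \<le> k" "\<forall>X Y. F X Y = F Y X"
        "H = (\<lambda>x y. x \<in> V \<and> y \<in> V \<and> x \<noteq> y \<and> (E x y \<noteq> (\<exists>X\<in>P. \<exists>Y\<in>P. x \<in> X \<and> y \<in> Y \<and> F X Y)))"
        using H(1) unfolding kflip_def by blast
      define comp where "comp x = {y. H\<^sup>*\<^sup>* x y}" for x
      have closed: "Z \<subseteq> V \<and> (\<forall>u w. u \<in> Z \<longrightarrow> H u w \<longrightarrow> w \<in> Z)"
        if KZ: "\<KK> \<subseteq> comp ` V" "Z = \<Union>\<KK>" for \<KK> Z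
      proof (intro conjI allI impI)
        show "Z \<subseteq> V" using KZ comp_sub[OF H(1)] unfolding comp_def by blast
        fix u w assume "u \<in> Z" "H u w"
        then obtain x where "x \<in> V" "H\<^sup>*\<^sup>* x u" "comp x \<in> \<KK>" using KZ unfolding comp_def by blast
        hence "H\<^sup>*\<^sup>* x w" using \<open>H u w\<close> by simp
        thus "w \<in> Z" using \<open>comp x \<in> \<KK>\<close> KZ unfolding comp_def by blast
      qed
      have span_piece: "\<exists>R. card R \<le> k \<and> Sp (T' \<inter> Z) ((W' \<inter> Z) \<union> R)"
        if KZ: "\<KK> \<subseteq> comp ` V" "Z = \<Union>\<KK>" for \<KK> Z
      proof -
        have c: "Z \<subseteq> V" "\<forall>u w. u \<in> Z \<longrightarrow> H u w \<longrightarrow> w \<in> Z" using closed[OF KZ] by auto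
        obtain R where "R \<subseteq> V - Z" "card R \<le> k" "Sp (T' \<inter> Z) ((W' \<inter> Z) \<union> R)"
          using Sp_flip[OF SpT' PF(1,2) PF(4) c] by blast
        thus ?thesis by blast
      qed
      have piece: "\<exists>t. dect (3*k+1) t \<and> lvs t = T' \<inter> comp x" if xT': "x \<in> T'" for x
      proof -
        have xV: "x \<in> V" using xT' T'sub TV by blast
        obtain R where R: "card R \<le> k" "Sp (T' \<inter> comp x) ((W' \<inter> comp x) \<union> R)"
          using span_piece[of "{comp x}" "comp x"] xV by auto
        have "card ((W' \<inter> comp x) \<union> R) \<le> card (W' \<inter> comp x) + card R" by (rule card_Un_le)
        also have "\<dots> \<le> 2*k" using H(2) xV R(1) unfolding comp_def by fastforce
        finally have c: "card ((W' \<inter> comp x) \<union> R) \<le> 2*k" .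
        have ne: "T' \<inter> comp x \<noteq> {}" using xT' unfolding comp_def by auto
        have "card (T' \<inter> comp x) < card T"
          using cT' card_mono[of T' "T' \<inter> comp x"] finT T'sub finite_subset by fastforce
        thus ?thesis using less.hyps[OF _ ne R(2) c] by blast
      qed
      have union: "\<exists>t. dect (3*k+1) t \<and> lvs t = T' \<inter> \<Union>\<KK>"
        if "finite \<KK>" "\<KK> \<noteq> {}" "\<KK> \<subseteq> comp ` T'" for \<KK>
        using that
      proof (induction \<KK> rule: finite_ne_induct)
        case (singleton C)
        then obtain x where "x \<in> T'" "C = comp x" by blast
        thus ?case using piece by simp
      next
        case (insert C \<KK>)
        obtain x where x: "x \<in> T'" "C = comp x" using insert.prems by blast
        obtain ta where ta: "dect (3*k+1) ta" "lvs ta = T' \<inter> C" using piece x by blast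
        have "\<KK> \<subseteq> comp ` T'" using insert.prems by simp
        then obtain tb where tb: "dect (3*k+1) tb" "lvs tb = T' \<inter> \<Union>\<KK>" using insert.IH by blast
        have disj: "lvs ta \<inter> lvs tb = {}"
        proof (rule ccontr)
          assume "lvs ta \<inter> lvs tb \<noteq> {}"
          then obtain z D where z: "z \<in> C" "D \<in> \<KK>" "z \<in> D" using ta tb by blast
          obtain y where y: "y \<in> T'" "D = comp y" using z(2) insert.prems by blast
          have "H\<^sup>*\<^sup>* x z" using z(1) x(2) unfolding comp_def by simp
          hence "comp x = comp z" using comp_eq[OF H(1)] unfolding comp_def by simp
          moreover have "H\<^sup>*\<^sup>* y z" using z(3) y(2) unfolding comp_def by simp
          hence "comp y = comp z" using comp_eq[OF H(1)] unfolding comp_def by simp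
          ultimately have "C = D" using x y by simp
          thus False using insert.hyps z(2) by blast
        qed
        have "comp ` T' \<subseteq> comp ` V" using T'sub TV by (intro image_mono) simp
        hence sub: "insert C \<KK> \<subseteq> comp ` V" using insert.prems by (rule subset_trans[rotated])
        obtain R where R: "card R \<le> k" "Sp (T' \<inter> \<Union>(insert C \<KK>)) ((W' \<inter> \<Union>(insert C \<KK>)) \<union> R)"
          using span_piece[OF sub refl] by blast
        have "card ((W' \<inter> \<Union>(insert C \<KK>)) \<union> R) \<le> card (W' \<inter> \<Union>(insert C \<KK>)) + card R"
          by (rule card_Un_le)
        also have "\<dots> \<le> card W' + k"
          using R(1) card_mono[of W' "W' \<inter> \<Union>(insert C \<KK>)"] W'V finV finite_subset by fastforce
        finally have "cutrank E (T' \<inter> \<Union>(insert C \<KK>)) (V - T' \<inter> \<Union>(insert C \<KK>)) \<le> 3*k+1"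
          using Sp_cr[OF R(2)] cW'eq by simp
        moreover have "lvs ta \<union> lvs tb = T' \<inter> \<Union>(insert C \<KK>)" using ta tb by auto
        ultimately have "dect (3*k+1) (Nd ta tb)" using dNd[OF ta(1) tb(1) disj] by simp
        thus ?case using \<open>lvs ta \<union> lvs tb = _\<close> by (intro exI[of _ "Nd ta tb"]) simp
      qed
      have "finite (comp ` T')" using finT T'sub finite_subset by blast
      moreover have "comp ` T' \<noteq> {}" using T'ne by blast
      ultimately obtain t where t: "dect (3*k+1) t" "lvs t = T' \<inter> \<Union>(comp ` T')"
        using union by blast
      have "T' \<inter> \<Union>(comp ` T') = T'" unfolding comp_def by auto
      thus ?thesis using t by auto
    qed
    then obtain t' where t': "dect (3*k+1) t'" "lvs t' = T'" by blast
    have vV: "v \<in> V" using vT TV by blast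
    have "cutrank E T (V - T) \<le> 3*k+1" using Sp_cr[OF less.prems(2)] less.prems(3) by simp
    moreover have "T' \<union> {v} = T" "T' \<inter> {v} = {}" unfolding T'_def using vT by auto
    ultimately have "dect (3*k+1) (Nd t' (Lf v))" using t' vV by (intro dNd dLf) auto
    thus ?thesis using \<open>T' \<union> {v} = T\<close> t'(2) by (intro exI[of _ "Nd t' (Lf v)"]) simp
  qed
qed

end

context grph begin

lemma kflip_E: "V \<noteq> {} \<Longrightarrow> k \<ge> 1 \<Longrightarrow> kflip k V E E"
  unfolding kflip_def
proof (intro exI[of _ "{V}"] exI[of _ "\<lambda>_ _. False"] conjI)
  assume "V \<noteq> {}" "k \<ge> 1"
  show "partition_on V {V}" using \<open>V \<noteq> {}\<close> by (auto simp: partition_on_def disjoint_def)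
  show "card {V} \<le> k" using \<open>k \<ge> 1\<close> by simp
  show "\<forall>X Y. False = False" by simp
  show "E = (\<lambda>x y. x \<in> V \<and> y \<in> V \<and> x \<noteq> y \<and> E x y \<noteq> (\<exists>X\<in>{V}. \<exists>Y\<in>{V}. x \<in> X \<and> y \<in> Y \<and> False))"
    using EV Eirr by (auto intro!: ext)
qed

lemma heavy_step:
  assumes W: "card W = 2*k+1" "finite W"
    and H1: "kflip k V E H1" and x: "k < card (W \<inter> {y. H1\<^sup>*\<^sup>* x y})"
    and H2: "kflip k V E H2" and y: "y \<in> V" "k < card (W \<inter> {z. H2\<^sup>*\<^sup>* y z})"
  shows "\<exists>u. H1\<^sup>*\<^sup>* x u \<and> k < card (W \<inter> {z. H2\<^sup>*\<^sup>* u z})"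
proof -
  let ?A = "W \<inter> {y. H1\<^sup>*\<^sup>* x y}" and ?B = "W \<inter> {z. H2\<^sup>*\<^sup>* y z}"
  have "?A \<inter> ?B \<noteq> {}"
  proof
    assume d: "?A \<inter> ?B = {}"
    have "card (?A \<union> ?B) = card ?A + card ?B" using d W(2) by (intro card_Un_disjoint) auto
    moreover have "card (?A \<union> ?B) \<le> card W" using W(2) by (intro card_mono) auto
    ultimately show False using x y(2) W(1) by simp
  qed
  then obtain u where u: "H1\<^sup>*\<^sup>* x u" "H2\<^sup>*\<^sup>* y u" by blast
  have "{z. H2\<^sup>*\<^sup>* y z} = {z. H2\<^sup>*\<^sup>* u z}" by (rule comp_eq[OF H2 u(2)])
  thus ?thesis using u(1) y(2) by auto
qed

lemma runner_wins:
  assumes k1: "k \<ge> 1" and WV: "W \<subseteq> V" and cW: "card W = 2*k+1"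
    and nobal: "\<And>H. kflip k V E H \<Longrightarrow> \<exists>x\<in>V. k < card (W \<inter> {y. H\<^sup>*\<^sup>* x y})"
  shows "\<not> flipper_wins k V E"
proof
  assume "flipper_wins k V E"
  then obtain \<sigma> where \<sigma>: "\<forall>h. kflip k V E (\<sigma> h)"
    "\<forall>v :: nat \<Rightarrow> 'a. v 0 \<in> V \<and> (\<forall>j. (stage E \<sigma> v j)\<^sup>*\<^sup>* (v j) (v (Suc j)))
        \<longrightarrow> (\<exists>i\<ge>1. \<not> (\<exists>u. stage E \<sigma> v i (v i) u))"
    unfolding flipper_wins_def by blast
  have finW: "finite W" using WV finV finite_subset by blast
  have Vne: "V \<noteq> {}" using cW WV by auto
  have kE: "kflip k V E E" using kflip_E[OF Vne k1] .
  define heavy where "heavy H x \<longleftrightarrow> k < card (W \<inter> {y. H\<^sup>*\<^sup>* x y})" for H x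
  obtain x0 where x0: "x0 \<in> V" "heavy E x0" using nobal[OF kE] unfolding heavy_def by blast
  define gr where "gr h = (if length h \<le> 1 then E else \<sigma> (butlast h))" for h :: "'a list"
  define nxt where "nxt h = (SOME u. (gr h)\<^sup>*\<^sup>* (last h) u \<and> heavy (\<sigma> h) u)" for h
  define hist where "hist j = rec_nat [x0] (\<lambda>_ h. h @ [nxt h]) j" for j
  have hist0: "hist 0 = [x0]" by (simp add: hist_def)
  have histS: "hist (Suc j) = hist j @ [nxt (hist j)]" for j by (simp add: hist_def)
  define v where "v j = last (hist j)" for j
  have hv: "hist j = map v [0..<Suc j]" for j
  proof (induction j)
    case 0 thus ?case by (simp add: hist0 v_def)
  next
    case (Suc j)
    have "v (Suc j) = nxt (hist j)" by (simp add: v_def histS)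
    thus ?case using Suc by (simp add: histS)
  qed
  have stg: "stage E \<sigma> v j = gr (hist j)" for j
  proof (cases j)
    case 0 thus ?thesis by (simp add: stage_def gr_def hist0)
  next
    case (Suc i)
    have "butlast (hist j) = map v [0..<j]" unfolding hv Suc by (simp add: butlast_append)
    thus ?thesis using Suc by (simp add: stage_def gr_def hv)
  qed
  have grk: "kflip k V E (gr h)" for h using kE \<sigma>(1) by (simp add: gr_def)
  have inv: "heavy (stage E \<sigma> v j) (v j) \<and> v j \<in> V" for j
  proof (induction j)
    case 0 thus ?case using x0 by (simp add: stage_def v_def hist0)
  next
    case (Suc j)
    obtain y where y: "y \<in> V" "heavy (\<sigma> (hist j)) y" using nobal[OF \<sigma>(1)[rule_format]] unfolding heavy_def by blast
    have "heavy (gr (hist j)) (v j)" using Suc.IH stg by simp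
    hence hx: "k < card (W \<inter> {y. (gr (hist j))\<^sup>*\<^sup>* (v j) y})" unfolding heavy_def .
    have hy: "k < card (W \<inter> {z. (\<sigma> (hist j))\<^sup>*\<^sup>* y z})" using y(2) unfolding heavy_def .
    have "\<exists>u. (gr (hist j))\<^sup>*\<^sup>* (v j) u \<and> k < card (W \<inter> {z. (\<sigma> (hist j))\<^sup>*\<^sup>* u z})"
      by (rule heavy_step[OF cW finW grk hx \<sigma>(1)[rule_format] y(1) hy])
    hence "\<exists>u. (gr (hist j))\<^sup>*\<^sup>* (last (hist j)) u \<and> heavy (\<sigma> (hist j)) u"
      unfolding heavy_def v_def .
    hence "(gr (hist j))\<^sup>*\<^sup>* (last (hist j)) (nxt (hist j)) \<and> heavy (\<sigma> (hist j)) (nxt (hist j))"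
      unfolding nxt_def by (rule someI_ex)
    hence n: "(gr (hist j))\<^sup>*\<^sup>* (v j) (nxt (hist j)) \<and> heavy (\<sigma> (hist j)) (nxt (hist j))"
      by (simp add: v_def)
    have vS: "v (Suc j) = nxt (hist j)" by (simp add: v_def histS)
    have sS: "stage E \<sigma> v (Suc j) = \<sigma> (hist j)" by (simp add: stage_def hv)
    have "v (Suc j) \<in> V" using comp_sub[OF grk[of "hist j"], of "v j" "v (Suc j)"] n vS Suc.IH by simp
    thus ?case using n vS sS by simp
  qed
  have moves: "(stage E \<sigma> v j)\<^sup>*\<^sup>* (v j) (v (Suc j))" for j
  proof -
    obtain y where y: "y \<in> V" "heavy (\<sigma> (hist j)) y" using nobal[OF \<sigma>(1)[rule_format]] unfolding heavy_def by blast
    have "heavy (gr (hist j)) (v j)" using inv stg by simp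
    hence hx: "k < card (W \<inter> {y. (gr (hist j))\<^sup>*\<^sup>* (v j) y})" unfolding heavy_def .
    have hy: "k < card (W \<inter> {z. (\<sigma> (hist j))\<^sup>*\<^sup>* y z})" using y(2) unfolding heavy_def .
    have "\<exists>u. (gr (hist j))\<^sup>*\<^sup>* (v j) u \<and> k < card (W \<inter> {z. (\<sigma> (hist j))\<^sup>*\<^sup>* u z})"
      by (rule heavy_step[OF cW finW grk hx \<sigma>(1)[rule_format] y(1) hy])
    hence "\<exists>u. (gr (hist j))\<^sup>*\<^sup>* (last (hist j)) u \<and> heavy (\<sigma> (hist j)) u"
      unfolding heavy_def v_def .
    hence "(gr (hist j))\<^sup>*\<^sup>* (last (hist j)) (nxt (hist j)) \<and> heavy (\<sigma> (hist j)) (nxt (hist j))"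
      unfolding nxt_def by (rule someI_ex)
    hence n: "(gr (hist j))\<^sup>*\<^sup>* (v j) (nxt (hist j))"
      by (simp add: v_def)
    have vS: "v (Suc j) = nxt (hist j)" by (simp add: v_def histS)
    show ?thesis using n vS stg by simp
  qed
  obtain i where i: "i \<ge> 1" "\<not> (\<exists>u. stage E \<sigma> v i (v i) u)"
    using \<sigma>(2) inv[of 0] moves by blast
  let ?H = "stage E \<sigma> v i"
  have hv': "k < card (W \<inter> {y. ?H\<^sup>*\<^sup>* (v i) y})" using inv[of i] unfolding heavy_def by simp
  have "\<exists>y. ?H\<^sup>*\<^sup>* (v i) y \<and> y \<noteq> v i"
  proof (rule ccontr)
    assume "\<not> ?thesis"
    hence "W \<inter> {y. ?H\<^sup>*\<^sup>* (v i) y} \<subseteq> {v i}" by auto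
    hence "card (W \<inter> {y. ?H\<^sup>*\<^sup>* (v i) y}) \<le> 1" using card_mono[of "{v i}"] by fastforce
    thus False using hv' k1 by simp
  qed
  then obtain y where "?H\<^sup>*\<^sup>* (v i) y" "y \<noteq> v i" by blast
  hence "\<exists>u. ?H (v i) u" by (metis converse_rtranclpE)
  thus False using i(2) by blast
qed

end

definition dsc :: "nat \<Rightarrow> nat \<Rightarrow> bool" where
  "dsc a x \<longleftrightarrow> (\<exists>j. x div 2^j = a)"

lemma dsc_refl: "dsc a a" unfolding dsc_def by (rule exI[of _ 0]) simp

lemma dsc_le: "dsc a x \<Longrightarrow> a \<le> x"
  unfolding dsc_def using div_le_dividend by blast

lemma dsc_trans: "dsc a b \<Longrightarrow> dsc b c \<Longrightarrow> dsc a c"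
proof -
  assume "dsc a b" "dsc b c"
  then obtain i j where "b div 2^i = a" "c div 2^j = b" unfolding dsc_def by blast
  hence "c div 2^(j+i) = a" by (simp add: power_add div_mult2_eq)
  thus "dsc a c" unfolding dsc_def by blast
qed

lemma dsc_child: "dsc a (2*a)" "dsc a (2*a+1)"
  unfolding dsc_def by (rule exI[of _ 1], simp)+

lemma dsc_parent: "dsc c a \<Longrightarrow> a \<noteq> c \<Longrightarrow> dsc c (a div 2)"
proof -
  assume "dsc c a" "a \<noteq> c"
  then obtain j where j: "a div 2^j = c" unfolding dsc_def by blast
  with \<open>a \<noteq> c\<close> have "j \<noteq> 0" by (cases j) auto
  then obtain i where "j = Suc i" by (cases j) auto
  hence "(a div 2) div 2^i = c" using j by (simp add: div_mult2_eq)
  thus ?thesis unfolding dsc_def by blast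
qed

lemma dsc_ne_le: "dsc a x \<Longrightarrow> a \<noteq> x \<Longrightarrow> a \<le> x div 2"
  using dsc_parent dsc_le by blast

lemma dsc_cases: "dsc a x \<Longrightarrow> dsc b x \<Longrightarrow> dsc a b \<or> dsc b a"
proof -
  assume "dsc a x" "dsc b x"
  then obtain i j where i: "x div 2^i = a" and j: "x div 2^j = b" unfolding dsc_def by blast
  show ?thesis
  proof (cases "i \<le> j")
    case True
    hence "b = a div 2^(j-i)" using i j by (metis div_mult2_eq le_add_diff_inverse power_add)
    thus ?thesis unfolding dsc_def by blast
  next
    case False
    hence "a = b div 2^(i-j)" using i j by (metis div_mult2_eq le_add_diff_inverse nat_le_linear power_add)
    thus ?thesis unfolding dsc_def by blast
  qed
qed

lemma dsc_sib: "n \<ge> 1 \<Longrightarrow> \<not> dsc (2*n) (2*n+1)" "\<not> dsc (2*n+1) (2*n)"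
proof -
  assume "n \<ge> 1"
  show "\<not> dsc (2*n) (2*n+1)"
  proof
    assume "dsc (2*n) (2*n+1)"
    hence "2*n \<le> (2*n+1) div 2" by (rule dsc_ne_le) simp
    thus False using \<open>n \<ge> 1\<close> by simp
  qed
next
  show "\<not> dsc (2*n+1) (2*n)" using dsc_le by fastforce
qed

fun hp :: "'a tr \<Rightarrow> nat \<Rightarrow> nat set" where
  "hp (Lf v) n = {n}"
| "hp (Nd a b) n = insert n (hp a (2*n) \<union> hp b (2*n+1))"

fun lf :: "'a tr \<Rightarrow> nat \<Rightarrow> ('a \<times> nat) set" where
  "lf (Lf v) n = {(v,n)}"
| "lf (Nd a b) n = lf a (2*n) \<union> lf b (2*n+1)"

fun subs :: "'a tr \<Rightarrow> 'a tr set" where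
  "subs (Lf v) = {Lf v}"
| "subs (Nd a b) = insert (Nd a b) (subs a \<union> subs b)"

lemma hp_fin: "finite (hp t n)" by (induction t arbitrary: n) auto

lemma hp_root: "n \<in> hp t n" by (cases t) auto

lemma hp_dsc: "q \<in> hp t n \<Longrightarrow> dsc n q"
proof (induction t arbitrary: n q)
  case (Lf v) thus ?case by (simp add: dsc_refl)
next
  case (Nd a b)
  consider "q = n" | "q \<in> hp a (2*n)" | "q \<in> hp b (2*n+1)" using Nd.prems by auto
  thus ?case
  proof cases
    case 1 thus ?thesis by (simp add: dsc_refl)
  next
    case 2 thus ?thesis using Nd.IH(1)[OF 2] dsc_child(1)[of n] dsc_trans by blast
  next
    case 3 thus ?thesis using Nd.IH(2)[OF 3] dsc_child(2)[of n] dsc_trans by blast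
  qed
qed

lemma lf_hp: "(v,m) \<in> lf t n \<Longrightarrow> m \<in> hp t n"
  by (induction t arbitrary: n) auto

lemma lvs_lf: "lvs t = fst ` lf t n"
  by (induction t arbitrary: n) (auto simp: image_Un)

lemma hp_parent: "q \<in> hp t n \<Longrightarrow> q \<noteq> n \<Longrightarrow> q div 2 \<in> hp t n"
proof (induction t arbitrary: n q)
  case (Lf v) thus ?case by simp
next
  case (Nd a b)
  show ?case
  proof (cases "q \<in> hp a (2*n)")
    case True
    thus ?thesis using Nd.IH(1)[of q "2*n"] by (cases "q = 2*n") auto
  next
    case False
    hence "q \<in> hp b (2*n+1)" using Nd.prems by auto
    thus ?thesis using Nd.IH(2)[of q "2*n+1"] by (cases "q = 2*n+1") auto
  qed
qed

lemma hp_pos: "n \<ge> 1 \<Longrightarrow> q \<in> hp t n \<Longrightarrow> q \<ge> 1"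
proof -
  assume "n \<ge> 1" "q \<in> hp t n"
  hence "n \<le> q" using hp_dsc dsc_le by blast
  thus "q \<ge> 1" using \<open>n \<ge> 1\<close> by simp
qed

lemma hp_disj: "n \<ge> 1 \<Longrightarrow> hp a (2*n) \<inter> hp b (2*n+1) = {}"
proof (rule ccontr)
  assume n: "n \<ge> 1" and "hp a (2*n) \<inter> hp b (2*n+1) \<noteq> {}"
  then obtain x where x: "x \<in> hp a (2*n)" "x \<in> hp b (2*n+1)" by blast
  have "dsc (2*n) x" by (rule hp_dsc[OF x(1)])
  moreover have "dsc (2*n+1) x" by (rule hp_dsc[OF x(2)])
  ultimately have "dsc (2*n) (2*n+1) \<or> dsc (2*n+1) (2*n)" by (rule dsc_cases)
  thus False using dsc_sib(1)[OF n] dsc_sib(2)[of n] by simp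
qed

lemma hp_n_notin: "n \<ge> 1 \<Longrightarrow> n \<notin> hp a (2*n)" "n \<ge> 1 \<Longrightarrow> n \<notin> hp b (2*n+1)"
proof -
  assume n: "n \<ge> 1"
  show "n \<notin> hp a (2*n)"
  proof
    assume "n \<in> hp a (2*n)"
    hence "2*n \<le> n" using hp_dsc dsc_le by blast
    thus False using n by simp
  qed
  show "n \<notin> hp b (2*n+1)"
  proof
    assume "n \<in> hp b (2*n+1)"
    hence "2*n+1 \<le> n" using hp_dsc dsc_le by blast
    thus False by simp
  qed
qed

lemma hp_sub:
  "q \<in> hp t n \<Longrightarrow> n \<ge> 1 \<Longrightarrow> \<exists>s\<in>subs t. hp s q = {x \<in> hp t n. dsc q x} \<and> lf s q = {(v,m) \<in> lf t n. dsc q m}"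
proof (induction t arbitrary: n q)
  case (Lf v) thus ?case by (auto simp: dsc_refl)
next
  case (Nd a b)
  show ?case
  proof (cases "q = n")
    case True
    have "hp (Nd a b) q = {x \<in> hp (Nd a b) n. dsc q x}" using True hp_dsc[of _ "Nd a b" n] by blast
    moreover have "lf (Nd a b) q = {(v,m) \<in> lf (Nd a b) n. dsc q m}"
      using True hp_dsc[of _ "Nd a b" n] lf_hp[of _ _ "Nd a b" n] by blast
    ultimately show ?thesis by auto
  next
    case False
    have n1: "n \<ge> 1" using Nd.prems by simp
    show ?thesis
    proof (cases "q \<in> hp a (2*n)")
      case True
      obtain s where s: "s \<in> subs a" "hp s q = {x \<in> hp a (2*n). dsc q x}" "lf s q = {(v,m) \<in> lf a (2*n). dsc q m}"
        using Nd.IH(1)[OF True] n1 by auto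
      have dq: "dsc (2*n) q" using hp_dsc True by blast
      have nb: "\<not> dsc q x" if "x \<in> hp b (2*n+1)" for x
      proof
        assume "dsc q x"
        moreover have "dsc (2*n+1) x" using hp_dsc that by blast
        ultimately have "dsc q (2*n+1) \<or> dsc (2*n+1) q" using dsc_cases by blast
        thus False using dq dsc_trans dsc_sib n1 dsc_cases by blast
      qed
      have nn: "\<not> dsc q n" using dq dsc_le dsc_trans n1 by fastforce
      have "hp s q = {x \<in> hp (Nd a b) n. dsc q x}" using s(2) nb nn by auto
      moreover have "lf s q = {(v,m) \<in> lf (Nd a b) n. dsc q m}" using s(3) nb lf_hp by fastforce
      ultimately show ?thesis using s(1) by auto
    next
      case False
      hence qb: "q \<in> hp b (2*n+1)" using Nd.prems \<open>q \<noteq> n\<close> by auto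
      obtain s where s: "s \<in> subs b" "hp s q = {x \<in> hp b (2*n+1). dsc q x}" "lf s q = {(v,m) \<in> lf b (2*n+1). dsc q m}"
        using Nd.IH(2)[OF qb] n1 by auto
      have dq: "dsc (2*n+1) q" using hp_dsc qb by blast
      have na: "\<not> dsc q x" if "x \<in> hp a (2*n)" for x
      proof
        assume "dsc q x"
        moreover have "dsc (2*n) x" using hp_dsc that by blast
        ultimately have "dsc q (2*n) \<or> dsc (2*n) q" using dsc_cases by blast
        thus False using dq dsc_trans dsc_sib n1 dsc_cases by blast
      qed
      have nn: "\<not> dsc q n" using dq dsc_le dsc_trans n1 by fastforce
      have "hp s q = {x \<in> hp (Nd a b) n. dsc q x}" using s(2) na nn by auto
      moreover have "lf s q = {(v,m) \<in> lf (Nd a b) n. dsc q m}" using s(3) na lf_hp by fastforce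
      ultimately show ?thesis using s(1) by auto
    qed
  qed
qed

lemma del_edge_comm: "del_edge T x y = del_edge T y x"
  unfolding del_edge_def by (auto simp: insert_commute)

lemma del_edge_sym:
  assumes "\<And>a b. T a b = T b a" shows "del_edge T x y a b = del_edge T x y b a"
  unfolding del_edge_def using assms by (auto simp: insert_commute)

lemma rtranclp_sym_gen:
  assumes "\<And>x y. R x y \<Longrightarrow> R y x" "R\<^sup>*\<^sup>* x y" shows "R\<^sup>*\<^sup>* y x"
  using assms(2)
proof (induction rule: rtranclp_induct)
  case base thus ?case by simp
next
  case (step y z)
  have "R z y" using step(2) assms(1) by blast
  thus ?case using step(3) by (rule converse_rtranclp_into_rtranclp)
qed

lemma del_dichot:
  assumes "T\<^sup>*\<^sup>* x z"
  shows "(del_edge T x y)\<^sup>*\<^sup>* x z \<or> (del_edge T x y)\<^sup>*\<^sup>* y z"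
  using assms
proof (induction rule: rtranclp_induct)
  case base thus ?case by simp
next
  case (step z z')
  show ?case
  proof (cases "{z, z'} = {x, y}")
    case True
    have "z' \<in> {x, y}" using True by blast
    hence "z' = x \<or> z' = y" by simp
    thus ?thesis by auto
  next
    case False
    hence "del_edge T x y z z'" using step(2) by (simp add: del_edge_def)
    thus ?thesis using step(3) rtranclp.rtrancl_into_rtrancl[of "del_edge T x y" x z z'] rtranclp.rtrancl_into_rtrancl[of "del_edge T x y" y z z'] by blast
  qed
qed

locale htree =
  fixes N :: "nat set"
  assumes finN: "finite N" and oneN: "1 \<in> N" and posN: "\<And>q. q \<in> N \<Longrightarrow> q \<ge> 1"
    and parN: "\<And>q. q \<in> N \<Longrightarrow> q \<noteq> 1 \<Longrightarrow> q div 2 \<in> N"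
begin

definition Tn :: "nat \<Rightarrow> nat \<Rightarrow> bool" where
  "Tn m n \<longleftrightarrow> m \<in> N \<and> n \<in> N \<and> (m = n div 2 \<or> n = m div 2)"

lemma Tn_sym: "Tn m n = Tn n m" unfolding Tn_def by auto

lemma Tn_irr: "\<not> Tn m m"
  unfolding Tn_def using posN by fastforce

lemma Tn_N: "Tn m n \<Longrightarrow> m \<in> N \<and> n \<in> N" unfolding Tn_def by simp

lemma conn1: "q \<in> N \<Longrightarrow> Tn\<^sup>*\<^sup>* 1 q"
proof (induction q rule: less_induct)
  case (less q)
  show ?case
  proof (cases "q = 1")
    case True thus ?thesis by simp
  next
    case False
    have p: "q div 2 \<in> N" using parN[OF less.prems False] .
    have "q div 2 < q" using posN[OF less.prems] by simp
    hence "Tn\<^sup>*\<^sup>* 1 (q div 2)" using less.IH p by blast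
    moreover have "Tn (q div 2) q" using p less.prems by (simp add: Tn_def)
    ultimately show ?thesis by (rule rtranclp.rtrancl_into_rtrancl)
  qed
qed

lemma conn: "x \<in> N \<Longrightarrow> y \<in> N \<Longrightarrow> Tn\<^sup>*\<^sup>* x y"
proof -
  assume "x \<in> N" "y \<in> N"
  have "Tn\<^sup>*\<^sup>* x 1" using rtranclp_sym_gen[of Tn, OF _ conn1[OF \<open>x \<in> N\<close>]] Tn_sym by blast
  thus ?thesis using conn1[OF \<open>y \<in> N\<close>] by (rule rtranclp_trans)
qed

lemma Tn_graph: "graph N Tn"
  unfolding graph_def using finN Tn_N Tn_sym Tn_irr by blast

definition Dc where "Dc c = {q \<in> N. dsc c q}"

context
  fixes c assumes cN: "c \<in> N" and c1: "c \<noteq> 1"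
begin

lemma pN: "c div 2 \<in> N" using parN[OF cN c1] .
lemma c2: "c \<ge> 2" using posN[OF cN] c1 by simp
lemma pc: "c div 2 < c" using c2 by simp

lemma Tcp: "Tn c (c div 2)" using cN pN by (simp add: Tn_def)

lemma reach_c_sub: "(del_edge Tn c (c div 2))\<^sup>*\<^sup>* c q \<Longrightarrow> q \<in> Dc c"
proof (induction rule: rtranclp_induct)
  case base thus ?case using cN dsc_refl by (simp add: Dc_def)
next
  case (step q q')
  have T: "Tn q q'" and ne: "{q, q'} \<noteq> {c, c div 2}" using step(2) by (auto simp: del_edge_def)
  have q'N: "q' \<in> N" using Tn_N[OF T] by simp
  have dq: "dsc c q" using step(3) by (simp add: Dc_def)
  show ?case
  proof (cases "q = q' div 2")
    case True
    hence "dsc q q'" unfolding dsc_def by (intro exI[of _ 1]) simp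
    thus ?thesis using dq dsc_trans q'N by (auto simp: Dc_def)
  next
    case False
    hence q': "q' = q div 2" using T by (simp add: Tn_def)
    have "q \<noteq> c" using ne q' by auto
    hence "dsc c q'" using dsc_parent[OF dq] q' by simp
    thus ?thesis using q'N by (simp add: Dc_def)
  qed
qed

lemma reach_c_sup: "q \<in> Dc c \<Longrightarrow> (del_edge Tn c (c div 2))\<^sup>*\<^sup>* c q"
proof (induction q rule: less_induct)
  case (less q)
  have qN: "q \<in> N" and dq: "dsc c q" using less.prems by (auto simp: Dc_def)
  show ?case
  proof (cases "q = c")
    case True thus ?thesis by simp
  next
    case False
    have cq: "c \<le> q div 2" using dsc_ne_le[OF dq] False by simp
    hence q1: "q \<noteq> 1" using c2 by auto
    have p: "q div 2 \<in> N" using parN[OF qN q1] .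
    have lt: "q div 2 < q" using posN[OF qN] by simp
    have "dsc c (q div 2)" using dsc_parent[OF dq] False by simp
    hence "(del_edge Tn c (c div 2))\<^sup>*\<^sup>* c (q div 2)" using less.IH[OF lt] p by (simp add: Dc_def)
    moreover have "del_edge Tn c (c div 2) (q div 2) q"
    proof -
      have "Tn (q div 2) q" using p qN by (simp add: Tn_def)
      moreover have "q \<noteq> c" "q \<noteq> c div 2" using False cq pc by auto
      ultimately show ?thesis unfolding del_edge_def by auto
    qed
    ultimately show ?thesis by (rule rtranclp.rtrancl_into_rtrancl)
  qed
qed

lemma reach_c: "(del_edge Tn c (c div 2))\<^sup>*\<^sup>* c q \<longleftrightarrow> q \<in> Dc c"
  using reach_c_sub reach_c_sup by blast

lemma del_sym: "del_edge Tn c (c div 2) a b \<Longrightarrow> del_edge Tn c (c div 2) b a"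
  using del_edge_sym[of Tn] Tn_sym by blast

lemma reach_p: "(del_edge Tn c (c div 2))\<^sup>*\<^sup>* (c div 2) q \<longleftrightarrow> q \<in> N - Dc c"
proof
  assume r: "(del_edge Tn c (c div 2))\<^sup>*\<^sup>* (c div 2) q"
  have qN: "q \<in> N"
  proof (cases "q = c div 2")
    case True thus ?thesis using pN by simp
  next
    case False
    then obtain z where "del_edge Tn c (c div 2) z q" using r by (metis rtranclp.cases)
    thus ?thesis using Tn_N by (auto simp: del_edge_def)
  qed
  have "q \<notin> Dc c"
  proof
    assume "q \<in> Dc c"
    hence "(del_edge Tn c (c div 2))\<^sup>*\<^sup>* c q" using reach_c by blast
    moreover have "(del_edge Tn c (c div 2))\<^sup>*\<^sup>* q (c div 2)"
      using rtranclp_sym_gen[of "del_edge Tn c (c div 2)", OF del_sym r] by blast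
    ultimately have "(del_edge Tn c (c div 2))\<^sup>*\<^sup>* c (c div 2)" by (rule rtranclp_trans)
    hence "dsc c (c div 2)" using reach_c by (simp add: Dc_def)
    thus False using dsc_le pc by fastforce
  qed
  thus "q \<in> N - Dc c" using qN by simp
next
  assume q: "q \<in> N - Dc c"
  have "Tn\<^sup>*\<^sup>* c q" using conn cN q by blast
  hence "(del_edge Tn c (c div 2))\<^sup>*\<^sup>* c q \<or> (del_edge Tn c (c div 2))\<^sup>*\<^sup>* (c div 2) q"
    by (rule del_dichot)
  thus "(del_edge Tn c (c div 2))\<^sup>*\<^sup>* (c div 2) q" using q reach_c by blast
qed

end

lemma Tn_cases: "Tn u w \<Longrightarrow> (u \<noteq> 1 \<and> w = u div 2) \<or> (w \<noteq> 1 \<and> u = w div 2)"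
  unfolding Tn_def using posN[of 0] by auto

lemma bridge: "Tn x y \<Longrightarrow> \<not> (del_edge Tn x y)\<^sup>*\<^sup>* x y"
proof
  assume T: "Tn x y" and r: "(del_edge Tn x y)\<^sup>*\<^sup>* x y"
  have xN: "x \<in> N" and yN: "y \<in> N" using Tn_N[OF T] by auto
  from Tn_cases[OF T] show False
  proof
    assume a: "x \<noteq> 1 \<and> y = x div 2"
    hence "y \<in> Dc x" using reach_c[OF xN] r by simp
    hence "dsc x y" by (simp add: Dc_def)
    thus False using dsc_le pc[OF xN] a by fastforce
  next
    assume a: "y \<noteq> 1 \<and> x = y div 2"
    have "(del_edge Tn y (y div 2))\<^sup>*\<^sup>* (y div 2) y" using r a del_edge_comm[of Tn x y] by simp
    hence "y \<in> N - Dc y" using reach_p[OF yN] a by blast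
    thus False using dsc_refl yN by (simp add: Dc_def)
  qed
qed

lemma Tn_tree: "is_tree N Tn"
  unfolding is_tree_def using finN oneN Tn_graph conn bridge by blast

lemma nbrs: "q \<in> N \<Longrightarrow> {y. Tn q y} = {y \<in> N. y = q div 2 \<or> y = 2*q \<or> y = 2*q+1}"
  unfolding Tn_def by auto

end

context grph begin

lemma dect_subs: "dect K t \<Longrightarrow> s \<in> subs t \<Longrightarrow> dect K s"
proof (induction t rule: dect.induct)
  case (dLf v) thus ?case by (auto intro: dect.dLf)
next
  case (dNd a b)
  show ?case using dNd dect.dNd[OF dNd(1,2,3,4)] by auto
qed

lemma dect_V: "dect K t \<Longrightarrow> lvs t \<subseteq> V"
  by (induction t rule: dect.induct) auto

lemma dect_cr: "dect K s \<Longrightarrow> K \<ge> 1 \<Longrightarrow> cutrank E (lvs s) (V - lvs s) \<le> K"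
proof (induction s rule: dect.induct)
  case (dLf v)
  have "cutrank E {v} (V - {v}) \<le> card {v}" by (rule cutrank_card_le) simp
  thus ?case using dLf by simp
next
  case (dNd a b) thus ?case by simp
qed

lemma dect_lfu: "dect K t \<Longrightarrow> (v,m) \<in> lf t n \<Longrightarrow> (v,m') \<in> lf t n \<Longrightarrow> m = m'"
proof (induction t arbitrary: n rule: dect.induct)
  case (dLf v) thus ?case by simp
next
  case (dNd a b)
  have la: "(v,x) \<in> lf a (2*n) \<Longrightarrow> v \<in> lvs a" for x using lvs_lf[of a "2*n"] by force
  have lb: "(v,x) \<in> lf b (2*n+1) \<Longrightarrow> v \<in> lvs b" for x using lvs_lf[of b "2*n+1"] by force
  from dNd.prems consider "(v,m) \<in> lf a (2*n)" | "(v,m) \<in> lf b (2*n+1)" by auto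
  thus ?case
  proof cases
    case 1
    hence "(v,m') \<in> lf a (2*n)" using dNd.prems(2) la lb dNd.hyps(3) by auto
    thus ?thesis using dNd.IH(1) 1 by blast
  next
    case 2
    hence "(v,m') \<in> lf b (2*n+1)" using dNd.prems(2) la lb dNd.hyps(3) by auto
    thus ?thesis using dNd.IH(2) 2 by blast
  qed
qed

lemma lf_inj: "n \<ge> 1 \<Longrightarrow> (v,m) \<in> lf t n \<Longrightarrow> (v',m) \<in> lf t n \<Longrightarrow> v = v'"
proof (induction t arbitrary: n)
  case (Lf x) thus ?case by simp
next
  case (Nd a b)
  have n2: "2*n \<ge> 1" "2*n+1 \<ge> 1" using Nd.prems(1) by auto
  have d: "hp a (2*n) \<inter> hp b (2*n+1) = {}" using hp_disj Nd.prems(1) by blast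
  from Nd.prems(2) consider "(v,m) \<in> lf a (2*n)" | "(v,m) \<in> lf b (2*n+1)" by auto
  thus ?case
  proof cases
    case 1
    hence "m \<in> hp a (2*n)" by (rule lf_hp)
    hence "(v',m) \<in> lf a (2*n)" using Nd.prems(3) d lf_hp[of v' m b "2*n+1"] by auto
    thus ?thesis using Nd.IH(1)[OF n2(1) 1] by blast
  next
    case 2
    hence "m \<in> hp b (2*n+1)" by (rule lf_hp)
    hence "(v',m) \<in> lf b (2*n+1)" using Nd.prems(3) d lf_hp[of v' m a "2*n"] by auto
    thus ?thesis using Nd.IH(2)[OF n2(2) 2] by blast
  qed
qed

theorem dect_decomp:
  assumes dt: "dect K t" and lt: "lvs t = V" and K1: "K \<ge> 1" and tN: "t = Nd a b"
  shows "\<exists>N T L. rank_decomp V E K N T L"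
proof -
  define N where "N = hp t 1"
  interpret ht: htree N
  proof
    show "finite N" by (simp add: N_def hp_fin)
    show "1 \<in> N" by (simp add: N_def hp_root)
    show "q \<ge> 1" if "q \<in> N" for q using hp_pos[of 1 q t] that by (simp add: N_def)
    show "q div 2 \<in> N" if "q \<in> N" "q \<noteq> 1" for q using hp_parent[of q t 1] that by (simp add: N_def)
  qed
  define L where "L v = (THE m. (v,m) \<in> lf t 1)" for v
  have lfV: "v \<in> V" if vm: "(v,m) \<in> lf t 1" for v m
  proof -
    have "v \<in> fst ` lf t 1" using vm by force
    thus ?thesis using lt lvs_lf[of t 1] by simp
  qed
  have Lm: "L v = m" if vm: "(v,m) \<in> lf t 1" for v m
    unfolding L_def
  proof (rule the_equality)
    show "(v,m) \<in> lf t 1" by (rule vm)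
    fix m' assume "(v,m') \<in> lf t 1"
    thus "m' = m" using dect_lfu[OF dt vm] by blast
  qed
  have Lv: "(v, L v) \<in> lf t 1" if vV: "v \<in> V" for v
  proof -
    have "v \<in> fst ` lf t 1" using vV lt lvs_lf[of t 1] by simp
    then obtain m where "(v,m) \<in> lf t 1" by force
    thus ?thesis using Lm by simp
  qed
  have LN: "L v \<in> N" if vV: "v \<in> V" for v unfolding N_def by (rule lf_hp[OF Lv[OF vV]])
  have two: "2 \<in> N" unfolding N_def tN using hp_root[of 2 a] by simp
  have sub: "\<exists>s\<in>subs t. {v\<in>V. dsc q (L v)} = lvs s" if qN: "q \<in> N" for q
  proof -
    obtain s where s: "s \<in> subs t" "lf s q = {(v,m) \<in> lf t 1. dsc q m}"
      using hp_sub[of q t 1] qN by (auto simp: N_def)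
    have "lvs s = fst ` lf s q" by (rule lvs_lf)
    also have "\<dots> = {v\<in>V. dsc q (L v)}"
    proof
      show "fst ` lf s q \<subseteq> {v\<in>V. dsc q (L v)}" using s(2) lfV Lm by force
      show "{v\<in>V. dsc q (L v)} \<subseteq> fst ` lf s q"
      proof
        fix v assume "v \<in> {v\<in>V. dsc q (L v)}"
        hence "(v, L v) \<in> lf s q" using s(2) Lv by auto
        thus "v \<in> fst ` lf s q" by force
      qed
    qed
    finally show ?thesis using s(1) by auto
  qed
  have ar: "(q = y div 2) = (y = 2*q \<or> y = 2*q+1)" for q y :: nat by presburger
  have deg: "(ht.Tn q y \<longleftrightarrow> y \<in> N \<and> (y = q div 2 \<or> y = 2*q \<or> y = 2*q+1))" if qN: "q \<in> N" for q y
    unfolding ht.Tn_def using qN ar[of q y] by blast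
  have leafc: "(tdeg ht.Tn q = 1 \<longleftrightarrow> (\<exists>v. (v,q) \<in> lf t 1)) \<and> tdeg ht.Tn q \<le> 3" if qN: "q \<in> N" for q
  proof -
    obtain s where s: "s \<in> subs t" "hp s q = {x \<in> N. dsc q x}" "lf s q = {(v,m) \<in> lf t 1. dsc q m}"
      using hp_sub[of q t 1] qN by (auto simp: N_def)
    have q1: "q \<ge> 1" using ht.posN qN by blast
    have nb: "{y. ht.Tn q y} = {y \<in> N. y = q div 2 \<or> y = 2*q \<or> y = 2*q+1}" using deg[OF qN] by simp
    have "{y. ht.Tn q y} \<subseteq> {q div 2, 2*q, 2*q+1}" using nb by auto
    hence "tdeg ht.Tn q \<le> card {q div 2, 2*q, 2*q+1}" unfolding tdeg_def by (intro card_mono) auto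
    also have "\<dots> \<le> 3" using card_length[of "[q div 2, 2*q, 2*q+1]"] by simp
    finally have le3: "tdeg ht.Tn q \<le> 3" .
    show ?thesis
    proof (cases s)
      case (Lf v)
      have hq: "{x \<in> N. dsc q x} = {q}" using s(2) Lf by simp
      have n2q: "2*q \<notin> N" "2*q+1 \<notin> N"
      proof -
        show "2*q \<notin> N"
        proof
          assume "2*q \<in> N" hence "2*q \<in> {q}" using hq dsc_child(1)[of q] by blast
          thus False using q1 by simp
        qed
        show "2*q+1 \<notin> N"
        proof
          assume "2*q+1 \<in> N" hence "2*q+1 \<in> {q}" using hq dsc_child(2)[of q] by blast
          thus False by simp
        qed
      qed
      have "q \<noteq> 1"
      proof
        assume "q = 1"
        hence "2 \<in> {x \<in> N. dsc q x}" using two dsc_child(1)[of 1] by simp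
        hence "2 \<in> {q}" using hq by simp
        thus False using \<open>q = 1\<close> by simp
      qed
      hence pN: "q div 2 \<in> N" using ht.parN qN by blast
      have "{y. ht.Tn q y} = {q div 2}" using nb n2q pN by auto
      hence "tdeg ht.Tn q = 1" unfolding tdeg_def by simp
      moreover have "(v,q) \<in> lf t 1" using s(3) Lf dsc_refl by auto
      ultimately show ?thesis using le3 by blast
    next
      case (Nd a' b')
      have "2*q \<in> hp s q" "2*q+1 \<in> hp s q" using Nd hp_root by auto
      hence in2: "2*q \<in> N" "2*q+1 \<in> N" using s(2) by auto
      have "{2*q, 2*q+1} \<subseteq> {y. ht.Tn q y}" using nb in2 by auto
      hence "card {2*q, 2*q+1} \<le> tdeg ht.Tn q" unfolding tdeg_def
        using ht.finN ht.Tn_N by (intro card_mono) (auto intro: finite_subset[of _ N])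
      hence "tdeg ht.Tn q \<ge> 2" by simp
      moreover have "\<not> (\<exists>v. (v,q) \<in> lf t 1)"
      proof
        assume "\<exists>v. (v,q) \<in> lf t 1"
        then obtain v where "(v,q) \<in> lf t 1" by blast
        hence "(v,q) \<in> lf s q" using s(3) dsc_refl by auto
        hence "(v,q) \<in> lf a' (2*q) \<or> (v,q) \<in> lf b' (2*q+1)" using Nd by simp
        hence "q \<in> hp a' (2*q) \<or> q \<in> hp b' (2*q+1)" using lf_hp[of v q a' "2*q"] lf_hp[of v q b' "2*q+1"] by blast
        hence "2*q \<le> q \<or> 2*q+1 \<le> q" using hp_dsc dsc_le by blast
        thus False using q1 by auto
      qed
      ultimately show ?thesis using le3 by auto
    qed
  qed
  have bij: "bij_betw L V {x\<in>N. tdeg ht.Tn x = 1}"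
    unfolding bij_betw_def
  proof
    show "inj_on L V"
    proof
      fix v v' assume vs: "v \<in> V" "v' \<in> V" and eq: "L v = L v'"
      have 1: "(v, L v) \<in> lf t 1" by (rule Lv[OF vs(1)])
      have "(v', L v') \<in> lf t 1" by (rule Lv[OF vs(2)])
      hence 2: "(v', L v) \<in> lf t 1" using eq by simp
      show "v = v'" by (rule lf_inj[OF _ 1 2]) simp
    qed
    show "L ` V = {x\<in>N. tdeg ht.Tn x = 1}"
    proof
      show "L ` V \<subseteq> {x\<in>N. tdeg ht.Tn x = 1}" using LN Lv leafc by blast
      show "{x\<in>N. tdeg ht.Tn x = 1} \<subseteq> L ` V"
      proof
        fix q assume "q \<in> {x\<in>N. tdeg ht.Tn x = 1}"
        then obtain v where "(v,q) \<in> lf t 1" using leafc by blast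
        thus "q \<in> L ` V" using lfV Lm by force
      qed
    qed
  qed
  have finV': "finite V" by (rule finV)
  have cuts: "cutrank E A (V - A) \<le> K" if T: "ht.Tn u w" and A: "A = {v\<in>V. (del_edge ht.Tn u w)\<^sup>*\<^sup>* u (L v)}" for u w A
  proof -
    have uN: "u \<in> N" and wN: "w \<in> N" using ht.Tn_N[OF T] by auto
    from ht.Tn_cases[OF T] show ?thesis
    proof
      assume a: "u \<noteq> 1 \<and> w = u div 2"
      obtain s where s: "s \<in> subs t" "{v\<in>V. dsc u (L v)} = lvs s" using sub[OF uN] by blast
      have "A = {v\<in>V. L v \<in> ht.Dc u}" unfolding A using a ht.reach_c[OF uN] by simp
      also have "\<dots> = {v\<in>V. dsc u (L v)}" using LN by (auto simp: ht.Dc_def)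
      finally have "A = lvs s" using s(2) by simp
      thus ?thesis using dect_cr[OF dect_subs[OF dt s(1)] K1] by simp
    next
      assume a: "w \<noteq> 1 \<and> u = w div 2"
      obtain s where s: "s \<in> subs t" "{v\<in>V. dsc w (L v)} = lvs s" using sub[OF wN] by blast
      have "del_edge ht.Tn u w = del_edge ht.Tn w (w div 2)" using a del_edge_comm by metis
      hence "A = {v\<in>V. L v \<in> N - ht.Dc w}" unfolding A using a ht.reach_p[OF wN] by simp
      also have "\<dots> = V - {v\<in>V. dsc w (L v)}" using LN by (auto simp: ht.Dc_def)
      finally have AS: "A = V - lvs s" using s(2) by simp
      have sV: "lvs s \<subseteq> V" using s(2) by blast
      have "V - A = lvs s" using AS sV by blast
      hence "cutrank E A (V - A) = cutrank E (V - lvs s) (lvs s)" using AS by simp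
      also have "\<dots> = cutrank E (lvs s) (V - lvs s)"
      proof (rule cutrank_sym)
        show "finite (lvs s)" using finV' sV finite_subset by blast
        show "finite (V - lvs s)" using finV' by simp
        show "E x y = E y x" for x y by (rule Esym)
      qed
      also have "\<dots> \<le> K" using dect_cr[OF dect_subs[OF dt s(1)] K1] .
      finally show ?thesis .
    qed
  qed
  have "rank_decomp V E K N ht.Tn L"
    unfolding rank_decomp_def
  proof (intro conjI allI impI ballI)
    show "is_tree N ht.Tn" by (rule ht.Tn_tree)
    show "\<And>x. x \<in> N \<Longrightarrow> tdeg ht.Tn x \<noteq> 1 \<Longrightarrow> tdeg ht.Tn x \<le> 3" using leafc by blast
    show "bij_betw L V {x \<in> N. tdeg ht.Tn x = 1}" by (rule bij)
    fix u w assume "ht.Tn u w"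
    thus "let A = {v \<in> V. (del_edge ht.Tn u w)\<^sup>*\<^sup>* u (L v)} in cutrank E A (V - A) \<le> K"
      using cuts by (simp add: Let_def)
  qed
  thus ?thesis by blast
qed

end

context grph begin

lemma kflip_empty: "kflip (card V) V E (\<lambda>_ _. False)"
  unfolding kflip_def
proof (intro exI[of _ "(\<lambda>v. {v}) ` V"] exI[of _ "\<lambda>X Y. \<exists>x\<in>X. \<exists>y\<in>Y. E x y"] conjI)
  show "partition_on V ((\<lambda>v. {v}) ` V)" by (auto simp: partition_on_def disjoint_def)
  show "card ((\<lambda>v. {v}) ` V) \<le> card V" by (rule card_image_le[OF finV])
  show "\<forall>X Y. (\<exists>x\<in>X. \<exists>y\<in>Y. E x y) = (\<exists>x\<in>Y. \<exists>y\<in>X. E x y)" using Esym by blast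
  show "(\<lambda>_ _. False) = (\<lambda>x y. x \<in> V \<and> y \<in> V \<and> x \<noteq> y \<and>
      E x y \<noteq> (\<exists>X\<in>(\<lambda>v. {v}) ` V. \<exists>Y\<in>(\<lambda>v. {v}) ` V. x \<in> X \<and> y \<in> Y \<and> (\<exists>x\<in>X. \<exists>y\<in>Y. E x y)))"
    by (intro ext) auto
qed

lemma fw_exists: "flipper_wins (card V) V E"
  unfolding flipper_wins_def
proof (intro exI[of _ "\<lambda>_. (\<lambda>_ _. False)"] conjI allI impI)
  show "\<And>h. kflip (card V) V E (\<lambda>_ _. False)" by (rule kflip_empty)
  fix v :: "nat \<Rightarrow> 'a"
  show "\<exists>i\<ge>1. \<not> (\<exists>u. stage E (\<lambda>_ _ _. False) v i (v i) u)"
    by (rule exI[of _ 1]) (simp add: stage_def)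
qed

lemma fw_wins: "flipper_wins (fw V E) V E"
  unfolding fw_def by (rule LeastI[of _ "card V"]) (rule fw_exists)

lemma fw_le: "flipper_wins k V E \<Longrightarrow> fw V E \<le> k"
  unfolding fw_def by (rule Least_le)

lemma fw0: "flipper_wins 0 V E \<Longrightarrow> V = {}"
proof -
  assume "flipper_wins 0 V E"
  then obtain \<sigma> where "\<forall>h. kflip 0 V E (\<sigma> h)" unfolding flipper_wins_def by blast
  then obtain P where P: "partition_on V P" "card P \<le> 0" unfolding kflip_def by blast
  have UP: "\<Union>P = V" using P(1) by (simp add: partition_on_def)
  have "finite P" using finV UP finite_UnionD by auto
  hence "P = {}" using P(2) by simp
  thus "V = {}" using UP by simp
qed

lemma decomp_of_fw:
  assumes fwk: "flipper_wins k V E" and c2: "\<not> card V \<le> 1"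
  shows "\<exists>N T L. rank_decomp V E (3*k+1) N T L"
proof -
    have Vne: "V \<noteq> {}" using c2 by auto
    have k1: "k \<ge> 1" using fw0 fwk Vne by (cases k) auto
    have bal: "\<exists>H. kflip k V E H \<and> (\<forall>x\<in>V. card (W \<inter> {y. H\<^sup>*\<^sup>* x y}) \<le> k)"
      if W: "W \<subseteq> V" "card W = 2*k+1" for W
    proof (rule ccontr)
      assume "\<not> ?thesis"
      hence "\<And>H. kflip k V E H \<Longrightarrow> \<exists>x\<in>V. k < card (W \<inter> {y. H\<^sup>*\<^sup>* x y})" by (auto simp: not_le)
      hence "\<not> flipper_wins k V E" by (rule runner_wins[OF k1 W])
      thus False using fwk by simp
    qed
    obtain t where t: "dect (3*k+1) t" "lvs t = V"
      using decomp_bal[OF k1 bal Vne Sp_V] by auto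
    obtain a b where tN: "t = Nd a b"
    proof (cases t)
      case (Lf v)
      hence "V = {v}" using t(2) by simp
      thus ?thesis using c2 by simp
    next
      case (Nd a b) thus ?thesis using that by blast
    qed
    show ?thesis using dect_decomp[OF t(1) t(2) _ tN] by auto
qed

lemma rw_le_fw: "flipper_wins k V E \<Longrightarrow> rw V E \<le> 3*k+1"
proof -
  assume fwk: "flipper_wins k V E"
  show ?thesis
  proof (cases "card V \<le> 1")
    case True thus ?thesis by (simp add: rw_def)
  next
    case False
    obtain N T L where "rank_decomp V E (3*k+1) N T L"
      using decomp_of_fw[OF fwk False] by blast
    hence "(LEAST k'. \<exists>N T L. rank_decomp V E k' N T L) \<le> 3*k+1" by (intro Least_le) blast
    thus ?thesis using False by (simp add: rw_def)
  qed
qed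

end

locale rtree = grph +
  fixes r :: nat and N :: "nat set" and T :: "nat \<Rightarrow> nat \<Rightarrow> bool" and L :: "'a \<Rightarrow> nat"
  assumes RD: "rank_decomp V E r N T L"
begin

lemma tr: "is_tree N T" using RD by (simp add: rank_decomp_def)
lemma finN: "finite N" using tr by (simp add: is_tree_def)
lemma Nne: "N \<noteq> {}" using tr by (simp add: is_tree_def)
lemma TN: "T a b \<Longrightarrow> a \<in> N \<and> b \<in> N" using tr by (simp add: is_tree_def graph_def)
lemma Tsym: "T a b = T b a" using tr unfolding is_tree_def graph_def by blast
lemma Tirr: "\<not> T a a" using tr unfolding is_tree_def graph_def by blast
lemma Tconn: "x \<in> N \<Longrightarrow> y \<in> N \<Longrightarrow> T\<^sup>*\<^sup>* x y" using tr by (simp add: is_tree_def)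
lemma Tbridge: "T x y \<Longrightarrow> \<not> (del_edge T x y)\<^sup>*\<^sup>* x y" using tr by (simp add: is_tree_def)
lemma Tdeg: "x \<in> N \<Longrightarrow> tdeg T x \<noteq> 1 \<Longrightarrow> tdeg T x \<le> 3" using RD by (simp add: rank_decomp_def)
lemma Lbij: "bij_betw L V {x\<in>N. tdeg T x = 1}" using RD by (simp add: rank_decomp_def)
lemma LN: "v \<in> V \<Longrightarrow> L v \<in> N" using Lbij unfolding bij_betw_def by blast
lemma Ldeg: "v \<in> V \<Longrightarrow> tdeg T (L v) = 1" using Lbij unfolding bij_betw_def by blast
lemma Linj: "v \<in> V \<Longrightarrow> w \<in> V \<Longrightarrow> L v = L w \<Longrightarrow> v = w" using Lbij unfolding bij_betw_def inj_on_def by blast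
lemma Tcut: "T u w \<Longrightarrow> cutrank E {v\<in>V. (del_edge T u w)\<^sup>*\<^sup>* u (L v)} (V - {v\<in>V. (del_edge T u w)\<^sup>*\<^sup>* u (L v)}) \<le> r"
  using RD unfolding rank_decomp_def Let_def by blast

definition Tm :: "nat \<Rightarrow> nat \<Rightarrow> nat \<Rightarrow> bool" where
  "Tm x a b \<longleftrightarrow> T a b \<and> a \<noteq> x \<and> b \<noteq> x"

definition NS :: "nat \<Rightarrow> nat \<Rightarrow> nat set" where
  "NS y x = {b. (Tm x)\<^sup>*\<^sup>* y b}"

lemma Tm_ne: "(Tm x)\<^sup>*\<^sup>* a b \<Longrightarrow> a \<noteq> x \<Longrightarrow> b \<noteq> x"
  by (induction rule: rtranclp_induct) (auto simp: Tm_def)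

lemma Tm_from: "(Tm x)\<^sup>*\<^sup>* x b \<Longrightarrow> b = x"
  by (erule converse_rtranclpE) (auto simp: Tm_def)

lemma Tm_sym: "Tm x a b \<Longrightarrow> Tm x b a" unfolding Tm_def using Tsym by blast

lemma del_to_Tm:
  assumes "T x y" "(del_edge T y x)\<^sup>*\<^sup>* y b" shows "b \<noteq> x \<and> (Tm x)\<^sup>*\<^sup>* y b"
  using assms(2)
proof (induction rule: rtranclp_induct)
  case base
  have "y \<noteq> x" using assms(1) Tirr by blast
  thus ?case by simp
next
  case (step c b)
  have "b \<noteq> x"
  proof
    assume "b = x"
    hence "(del_edge T y x)\<^sup>*\<^sup>* y x" using step(1,2) by simp
    moreover have "T y x" using assms(1) Tsym by simp
    ultimately show False using Tbridge by blast
  qed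
  moreover have "Tm x c b" using step(2) step(3) \<open>b \<noteq> x\<close> by (auto simp: Tm_def del_edge_def)
  ultimately show ?case using step(3) by (meson rtranclp.rtrancl_into_rtrancl)
qed

lemma Tm_to_del:
  assumes "(Tm x)\<^sup>*\<^sup>* y b" shows "(del_edge T y x)\<^sup>*\<^sup>* y b"
proof -
  have "Tm x a c \<Longrightarrow> del_edge T y x a c" for a c unfolding Tm_def del_edge_def by auto
  thus ?thesis using assms by (metis (no_types, lifting) mono_rtranclp)
qed

lemma NS_S:
  assumes "T x y"
  shows "{v\<in>V. (del_edge T y x)\<^sup>*\<^sup>* y (L v)} = {v\<in>V. L v \<in> NS y x}"
  unfolding NS_def using del_to_Tm[OF assms] Tm_to_del by blast

lemma NS_notx: "T x y \<Longrightarrow> b \<in> NS y x \<Longrightarrow> b \<noteq> x"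
  unfolding NS_def using Tm_ne Tirr by blast

lemma NS_disj:
  assumes "T x y" "T x y'" "y \<noteq> y'" "b \<in> NS y x" "b \<in> NS y' x"
  shows False
proof -
  have "(Tm x)\<^sup>*\<^sup>* y b" "(Tm x)\<^sup>*\<^sup>* y' b" using assms(4,5) by (auto simp: NS_def)
  hence "(Tm x)\<^sup>*\<^sup>* b y'" using rtranclp_sym_gen[of "Tm x"] Tm_sym by blast
  hence "(Tm x)\<^sup>*\<^sup>* y y'" using \<open>(Tm x)\<^sup>*\<^sup>* y b\<close> by (rule rtranclp_trans[rotated])
  hence "(del_edge T y x)\<^sup>*\<^sup>* y y'" by (rule Tm_to_del)
  moreover have "del_edge T y x y' x"
  proof -
    have "T y' x" using assms(2) Tsym by simp
    moreover have "{y', x} \<noteq> {y, x}"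
    proof
      assume "{y', x} = {y, x}"
      hence "y' \<in> {y, x}" by blast
      moreover have "y' \<noteq> x" using assms(2) Tirr by blast
      ultimately show False using assms(3) by auto
    qed
    ultimately show ?thesis by (simp add: del_edge_def)
  qed
  ultimately have "(del_edge T y x)\<^sup>*\<^sup>* y x" by (rule rtranclp.rtrancl_into_rtrancl)
  moreover have "T y x" using assms(1) Tsym by simp
  ultimately show False using Tbridge by blast
qed

lemma NS_disj2:
  assumes "T x y" "b \<in> NS y x" "b \<in> NS x y"
  shows False
proof -
  have "(del_edge T y x)\<^sup>*\<^sup>* y b" using assms(2) Tm_to_del by (simp add: NS_def)
  moreover have xb: "(del_edge T x y)\<^sup>*\<^sup>* x b" using assms(3) Tm_to_del by (simp add: NS_def)
  have sy: "del_edge T x y a c \<Longrightarrow> del_edge T x y c a" for a c using del_edge_sym[of T x y a c] Tsym by blast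
  have "(del_edge T x y)\<^sup>*\<^sup>* b x" using rtranclp_sym_gen[of "del_edge T x y", OF sy xb] by blast
  hence "(del_edge T y x)\<^sup>*\<^sup>* b x" using del_edge_comm[of T x y] by simp
  ultimately have "(del_edge T y x)\<^sup>*\<^sup>* y x" by (rule rtranclp_trans)
  moreover have "T y x" using assms(1) Tsym by simp
  ultimately show False using Tbridge by blast
qed

lemma reach_avoid:
  assumes "T\<^sup>*\<^sup>* a b" "b \<noteq> x"
  shows "(Tm x)\<^sup>*\<^sup>* a b \<or> (\<exists>y. T x y \<and> (Tm x)\<^sup>*\<^sup>* y b)"
  using assms
proof (induction arbitrary: rule: rtranclp_induct)
  case base thus ?case by simp
next
  case (step c b)
  show ?case
  proof (cases "c = x")
    case True thus ?thesis using step(2) by auto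
  next
    case False
    have Tcb: "Tm x c b" using step(2) step(4) False by (simp add: Tm_def)
    from step(3)[OF False] show ?thesis
    proof
      assume "(Tm x)\<^sup>*\<^sup>* a c"
      thus ?thesis using Tcb by (meson rtranclp.rtrancl_into_rtrancl)
    next
      assume "\<exists>y. T x y \<and> (Tm x)\<^sup>*\<^sup>* y c"
      thus ?thesis using Tcb by (meson rtranclp.rtrancl_into_rtrancl)
    qed
  qed
qed

lemma NS_cover:
  assumes "x \<in> N" "b \<in> N" "b \<noteq> x"
  shows "\<exists>y. T x y \<and> b \<in> NS y x"
proof -
  have "(Tm x)\<^sup>*\<^sup>* x b \<or> (\<exists>y. T x y \<and> (Tm x)\<^sup>*\<^sup>* y b)"
    by (rule reach_avoid[OF Tconn[OF assms(1,2)] assms(3)])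
  thus ?thesis using Tm_from assms(3) by (auto simp: NS_def)
qed

lemma NS_sub: "T x y \<Longrightarrow> NS y x \<subseteq> N"
proof
  fix b assume "T x y" "b \<in> NS y x"
  hence r: "(Tm x)\<^sup>*\<^sup>* y b" by (simp add: NS_def)
  show "b \<in> N"
  proof (cases "b = y")
    case True thus ?thesis using TN \<open>T x y\<close> by blast
  next
    case False
    then obtain z where "Tm x z b" using r by (metis rtranclp.cases)
    thus ?thesis using TN by (auto simp: Tm_def)
  qed
qed

lemma NS_dec:
  assumes "T x y" "T y y'" "y' \<noteq> x"
  shows "NS y' y \<subset> NS y x"
proof
  show "NS y' y \<subseteq> NS y x"
  proof
    fix b assume "b \<in> NS y' y"
    hence "(Tm y)\<^sup>*\<^sup>* y' b" by (simp add: NS_def)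
    hence r: "(del_edge T y x)\<^sup>*\<^sup>* y' b"
    proof (rule mono_rtranclp[rule_format, rotated])
      fix a c assume "Tm y a c" thus "del_edge T y x a c" unfolding Tm_def del_edge_def by auto
    qed
    have "del_edge T y x y y'"
    proof -
      have "{y, y'} \<noteq> {y, x}"
      proof
        assume "{y, y'} = {y, x}"
        hence "y' \<in> {y, x}" by blast
        moreover have "y' \<noteq> y" using assms(2) Tirr by blast
        ultimately show False using assms(3) by auto
      qed
      thus ?thesis using assms(2) by (simp add: del_edge_def)
    qed
    hence "(del_edge T y x)\<^sup>*\<^sup>* y b" using r by (rule converse_rtranclp_into_rtranclp)
    thus "b \<in> NS y x" using del_to_Tm[OF assms(1)] by (simp add: NS_def)
  qed
  have "y \<in> NS y x" by (simp add: NS_def)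
  moreover have "y \<notin> NS y' y"
  proof
    assume "y \<in> NS y' y"
    moreover have "y' \<noteq> y" using assms(2) Tirr by blast
    ultimately show False using Tm_ne by (auto simp: NS_def)
  qed
  ultimately show "NS y' y \<noteq> NS y x" by blast
qed

end

context rtree begin

definition nxt :: "nat \<Rightarrow> 'a \<Rightarrow> nat" where
  "nxt x v = (if \<exists>y. T x y \<and> L v \<in> NS y x then SOME y. T x y \<and> L v \<in> NS y x else x)"

definition Sx :: "nat \<Rightarrow> nat \<Rightarrow> 'a set" where
  "Sx y x = {w\<in>V. L w \<in> NS y x}"

definition np :: "nat \<Rightarrow> 'a \<Rightarrow> 'a set" where
  "np x v = (if L v = x then {v} else Sx (nxt x v) x)"

definition key :: "nat \<Rightarrow> 'a \<Rightarrow> 'a set \<times> 'a set" where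
  "key x v = (np x v, {b \<in> V - np x v. E v b})"

definition cls :: "nat \<Rightarrow> 'a \<Rightarrow> 'a set" where
  "cls x v = {w\<in>V. key x w = key x v}"

definition Fl :: "nat \<Rightarrow> 'a set \<Rightarrow> 'a set \<Rightarrow> bool" where
  "Fl x X Y \<longleftrightarrow> (\<exists>a\<in>X. \<exists>b\<in>Y. E a b \<and> np x a \<noteq> np x b)"

definition Sep :: "nat \<Rightarrow> 'a \<Rightarrow> 'a \<Rightarrow> bool" where
  "Sep x = (\<lambda>a b. a \<in> V \<and> b \<in> V \<and> a \<noteq> b \<and>
      (E a b \<noteq> (\<exists>X\<in>cls x ` V. \<exists>Y\<in>cls x ` V. a \<in> X \<and> b \<in> Y \<and> Fl x X Y)))"

lemma nxt_ok:
  assumes "x \<in> N" "v \<in> V" "L v \<noteq> x"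
  shows "T x (nxt x v) \<and> L v \<in> NS (nxt x v) x"
proof -
  have ex: "\<exists>y. T x y \<and> L v \<in> NS y x" using NS_cover[OF assms(1) LN[OF assms(2)] assms(3)] .
  hence "nxt x v = (SOME y. T x y \<and> L v \<in> NS y x)" by (simp add: nxt_def)
  thus ?thesis using someI_ex[OF ex] by simp
qed

lemma nxt_N: "x \<in> N \<Longrightarrow> nxt x v \<in> N"
proof -
  assume xN: "x \<in> N"
  show ?thesis
  proof (cases "\<exists>y. T x y \<and> L v \<in> NS y x")
    case True
    hence "T x (nxt x v)" using someI_ex[OF True] by (simp add: nxt_def)
    thus ?thesis using TN by blast
  next
    case False
    have "nxt x v = x" unfolding nxt_def using False by (rule if_not_P)
    thus ?thesis using xN by simp
  qed
qed

context fixes x assumes xN: "x \<in> N"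
begin

lemma np_mem: "v \<in> V \<Longrightarrow> v \<in> np x v"
  using nxt_ok[OF xN] by (auto simp: np_def Sx_def)

lemma np_sub: "np x v \<subseteq> V \<or> L v = x \<and> np x v = {v}"
  by (auto simp: np_def Sx_def)

lemma np_subV: "v \<in> V \<Longrightarrow> np x v \<subseteq> V"
  by (auto simp: np_def Sx_def)

lemma np_eq:
  assumes vV: "v \<in> V" and w: "w \<in> np x v"
  shows "np x w = np x v"
proof (cases "L v = x")
  case True thus ?thesis using w by (simp add: np_def)
next
  case False
  let ?y = "nxt x v"
  have y: "T x ?y" "L v \<in> NS ?y x" using nxt_ok[OF xN vV False] by auto
  have wS: "w \<in> V" "L w \<in> NS ?y x" using w False by (auto simp: np_def Sx_def)
  have Lw: "L w \<noteq> x" using NS_notx[OF y(1) wS(2)] .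
  let ?y' = "nxt x w"
  have y': "T x ?y'" "L w \<in> NS ?y' x" using nxt_ok[OF xN wS(1) Lw] by auto
  have "?y' = ?y"
  proof (rule ccontr)
    assume "?y' \<noteq> ?y"
    hence "?y \<noteq> ?y'" by simp
    thus False using NS_disj[OF y(1) y'(1) _ wS(2) y'(2)] by blast
  qed
  thus ?thesis using Lw False by (simp add: np_def)
qed

lemma np_card: "card (np x ` V) \<le> 3"
proof -
  have finT: "finite {y. T x y}" using finN TN by (auto intro: finite_subset[of _ N])
  have "np x ` V \<subseteq> (\<lambda>v. {v}) ` {v\<in>V. L v = x} \<union> (\<lambda>y. Sx y x) ` {y. T x y}"
  proof
    fix p assume "p \<in> np x ` V"
    then obtain v where v: "v \<in> V" "p = np x v" by blast
    show "p \<in> (\<lambda>v. {v}) ` {v\<in>V. L v = x} \<union> (\<lambda>y. Sx y x) ` {y. T x y}"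
    proof (cases "L v = x")
      case True thus ?thesis using v by (simp add: np_def)
    next
      case False
      hence "T x (nxt x v)" using nxt_ok[OF xN v(1)] by blast
      thus ?thesis using v False by (auto simp: np_def)
    qed
  qed
  hence "card (np x ` V) \<le> card ((\<lambda>v. {v}) ` {v\<in>V. L v = x} \<union> (\<lambda>y. Sx y x) ` {y. T x y})"
    using finV finT by (intro card_mono) auto
  also have "\<dots> \<le> card ((\<lambda>v. {v}) ` {v\<in>V. L v = x}) + card ((\<lambda>y. Sx y x) ` {y. T x y})"
    by (rule card_Un_le)
  also have "\<dots> \<le> card {v\<in>V. L v = x} + tdeg T x"
    unfolding tdeg_def using finV finT by (intro add_mono card_image_le) auto
  also have "\<dots> \<le> 3"
  proof (cases "tdeg T x = 1")
    case True
    have fin: "finite {v\<in>V. L v = x}" using finV by simp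
    have "\<forall>a\<in>{v\<in>V. L v = x}. \<forall>b\<in>{v\<in>V. L v = x}. a = b" using Linj by auto
    hence "card {v\<in>V. L v = x} \<le> 1" using card_le_Suc0_iff_eq[OF fin] by simp
    thus ?thesis using True by simp
  next
    case False
    have e: "{v\<in>V. L v = x} = {}" using Ldeg False by auto
    show ?thesis unfolding e using Tdeg[OF xN False] by simp
  qed
  finally show ?thesis .
qed

lemma np_rows: "v \<in> V \<Longrightarrow> card ((\<lambda>a. {b \<in> V - np x v. E a b}) ` np x v) \<le> 2^r"
proof (cases "L v = x")
  case True thus ?thesis by (simp add: np_def)
next
  case False
  assume vV: "v \<in> V"
  let ?y = "nxt x v"
  have y: "T x ?y" using nxt_ok[OF xN vV False] by auto
  have e: "np x v = {w\<in>V. (del_edge T ?y x)\<^sup>*\<^sup>* ?y (L w)}"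
    using False NS_S[OF y] by (simp add: np_def Sx_def)
  have "T ?y x" using y Tsym by simp
  hence cr: "cutrank E (np x v) (V - np x v) \<le> r" unfolding e by (rule Tcut)
  have "card ((\<lambda>a. {b \<in> V - np x v. E a b}) ` np x v) \<le> 2 ^ cutrank E (np x v) (V - np x v)"
    by (rule rows_card) (use np_subV[OF vV] finV finite_subset in blast)
  also have "\<dots> \<le> 2^r" using cr by (simp add: power_increasing)
  finally show ?thesis .
qed

lemma cls_mem: "v \<in> V \<Longrightarrow> v \<in> cls x v" by (simp add: cls_def)

lemma cls_eq: "w \<in> cls x v \<Longrightarrow> cls x w = cls x v"
  by (auto simp: cls_def)

lemma part: "partition_on V (cls x ` V)"
  unfolding partition_on_def disjoint_def
proof (intro conjI ballI impI)
  show "\<Union>(cls x ` V) = V" using cls_mem by (auto simp: cls_def)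
  show "{} \<notin> cls x ` V" using cls_mem by blast
  fix A B assume "A \<in> cls x ` V" "B \<in> cls x ` V" "A \<noteq> B"
  then obtain a b where ab: "A = cls x a" "B = cls x b" by blast
  show "A \<inter> B = {}"
  proof (rule ccontr)
    assume "A \<inter> B \<noteq> {}"
    then obtain c where "c \<in> cls x a" "c \<in> cls x b" using ab by blast
    hence "cls x c = cls x a" "cls x c = cls x b" using cls_eq by blast+
    thus False using ab \<open>A \<noteq> B\<close> by simp
  qed
qed

lemma part_card: "card (cls x ` V) \<le> 3 * 2^r"
proof -
  define rows where "rows p = (\<lambda>a. {b \<in> V - p. E a b}) ` p" for p
  define cl' where "cl' k = {w\<in>V. key x w = k}" for k
  have "cls x ` V = cl' ` (key x ` V)" by (auto simp: cls_def cl'_def)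
  hence "card (cls x ` V) \<le> card (key x ` V)" by (simp add: card_image_le finV)
  also have "\<dots> \<le> card (Sigma (np x ` V) rows)"
  proof (rule card_mono)
    have "finite (rows p)" if pin: "p \<in> np x ` V" for p
    proof -
      obtain v where "v \<in> V" "p = np x v" using pin by blast
      hence "p \<subseteq> V" using np_subV by simp
      hence "finite p" using finV finite_subset by blast
      thus ?thesis unfolding rows_def by simp
    qed
    thus "finite (Sigma (np x ` V) rows)" using finV by (intro finite_SigmaI) auto
    show "key x ` V \<subseteq> Sigma (np x ` V) rows"
      using np_mem by (auto simp: key_def rows_def)
  qed
  also have "\<dots> = (\<Sum>p\<in>np x ` V. card (rows p))"
  proof (rule card_SigmaI)
    show "finite (np x ` V)" using finV by simp
    show "\<forall>p\<in>np x ` V. finite (rows p)"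
    proof
      fix p assume "p \<in> np x ` V"
      then obtain v where "v \<in> V" "p = np x v" by blast
      hence "p \<subseteq> V" using np_subV by simp
      hence "finite p" using finV finite_subset by blast
      thus "finite (rows p)" unfolding rows_def by simp
    qed
  qed
  also have "\<dots> \<le> (\<Sum>p\<in>np x ` V. 2^r)"
    by (rule sum_mono) (use np_rows in \<open>auto simp: rows_def\<close>)
  also have "\<dots> = card (np x ` V) * 2^r" by simp
  also have "\<dots> \<le> 3 * 2^r" using np_card by simp
  finally show ?thesis .
qed

lemma wd:
  assumes "a \<in> V" "a' \<in> V" "b \<in> V" "b' \<in> V" "key x a = key x a'" "key x b = key x b'"
    and "np x a \<noteq> np x b"
  shows "E a b = E a' b'"
proof -
  have npa: "np x a' = np x a" and npb: "np x b' = np x b" using assms(5,6) by (auto simp: key_def)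
  have ra: "{c \<in> V - np x a. E a c} = {c \<in> V - np x a. E a' c}" using assms(5) npa by (simp add: key_def)
  have rb: "{c \<in> V - np x b. E b c} = {c \<in> V - np x b. E b' c}" using assms(6) npb by (simp add: key_def)
  have bna: "b \<notin> np x a"
  proof
    assume "b \<in> np x a"
    hence "np x b = np x a" using np_eq assms(1) by blast
    thus False using assms(7) by simp
  qed
  have anb: "a' \<notin> np x b"
  proof
    assume "a' \<in> np x b"
    hence "np x a' = np x b" using np_eq assms(3) by blast
    thus False using assms(7) npa by simp
  qed
  have "E a b = E a' b" using ra bna assms(3) by blast
  also have "\<dots> = E b a'" by (rule Esym)
  also have "\<dots> = E b' a'" using rb anb assms(2) by blast
  also have "\<dots> = E a' b'" by (rule Esym)
  finally show ?thesis .
qed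

lemma sep_iff:
  assumes "a \<in> V" "b \<in> V"
  shows "(\<exists>X\<in>cls x ` V. \<exists>Y\<in>cls x ` V. a \<in> X \<and> b \<in> Y \<and> Fl x X Y) \<longleftrightarrow> (np x a \<noteq> np x b \<and> E a b)"
proof
  assume "\<exists>X\<in>cls x ` V. \<exists>Y\<in>cls x ` V. a \<in> X \<and> b \<in> Y \<and> Fl x X Y"
  then obtain X Y where XY: "X \<in> cls x ` V" "Y \<in> cls x ` V" "a \<in> X" "b \<in> Y" "Fl x X Y" by blast
  have X: "X = cls x a" using XY(1,3) cls_eq by blast
  have Y: "Y = cls x b" using XY(2,4) cls_eq by blast
  obtain a' b' where ab: "a' \<in> cls x a" "b' \<in> cls x b" "E a' b'" "np x a' \<noteq> np x b'"
    using XY(5) X Y by (auto simp: Fl_def)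
  have k: "a' \<in> V" "b' \<in> V" "key x a = key x a'" "key x b = key x b'" using ab by (auto simp: cls_def)
  have "np x a \<noteq> np x b" using ab(4) k(3,4) by (auto simp: key_def)
  moreover have "E a b" using wd[OF assms(1) k(1) assms(2) k(2) k(3) k(4) \<open>np x a \<noteq> np x b\<close>] ab(3) by simp
  ultimately show "np x a \<noteq> np x b \<and> E a b" by simp
next
  assume h: "np x a \<noteq> np x b \<and> E a b"
  have "Fl x (cls x a) (cls x b)" unfolding Fl_def using h cls_mem assms by blast
  thus "\<exists>X\<in>cls x ` V. \<exists>Y\<in>cls x ` V. a \<in> X \<and> b \<in> Y \<and> Fl x X Y" using cls_mem assms by blast
qed

lemma Sep_np: "Sep x a b \<Longrightarrow> np x a = np x b \<and> a \<in> V \<and> b \<in> V"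
proof -
  assume s: "Sep x a b"
  hence ab: "a \<in> V" "b \<in> V" by (auto simp: Sep_def)
  have s': "E a b \<noteq> (\<exists>X\<in>cls x ` V. \<exists>Y\<in>cls x ` V. a \<in> X \<and> b \<in> Y \<and> Fl x X Y)"
    using s unfolding Sep_def by (rule conjunct2[OF conjunct2[OF conjunct2]])
  have "E a b \<noteq> (np x a \<noteq> np x b \<and> E a b)" using s' unfolding sep_iff[OF ab] .
  thus ?thesis using ab by auto
qed

lemma Sep_kflip: "kflip (3 * 2^r) V E (Sep x)"
  unfolding kflip_def
proof (intro exI[of _ "cls x ` V"] exI[of _ "Fl x"] conjI)
  show "partition_on V (cls x ` V)" by (rule part)
  show "card (cls x ` V) \<le> 3 * 2^r" by (rule part_card)
  show "\<forall>X Y. Fl x X Y = Fl x Y X" unfolding Fl_def using Esym by blast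
  show "Sep x = (\<lambda>a b. a \<in> V \<and> b \<in> V \<and> a \<noteq> b \<and>
      (E a b \<noteq> (\<exists>X\<in>cls x ` V. \<exists>Y\<in>cls x ` V. a \<in> X \<and> b \<in> Y \<and> Fl x X Y)))" by (simp add: Sep_def)
qed

lemma Sep_leaf: "v \<in> V \<Longrightarrow> L v = x \<Longrightarrow> \<not> Sep x v u"
proof
  assume v: "v \<in> V" "L v = x" and s: "Sep x v u"
  have "np x u = {v}" using Sep_np[OF s] v by (simp add: np_def)
  moreover have "u \<in> np x u" using np_mem Sep_np[OF s] by blast
  ultimately have "u = v" by simp
  thus False using s by (simp add: Sep_def)
qed

lemma Sep_reach: "(Sep x)\<^sup>*\<^sup>* a b \<Longrightarrow> a \<in> V \<Longrightarrow> np x b = np x a \<and> b \<in> V"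
  by (induction rule: rtranclp_induct) (auto dest: Sep_np)

end
end

context rtree begin

definition ro :: nat where "ro = (SOME x. x \<in> N)"
definition st :: "'a list \<Rightarrow> nat" where "st h = fold (\<lambda>v x. nxt x v) (tl h) ro"

lemma ro_N: "ro \<in> N" unfolding ro_def using Nne by (simp add: some_in_eq)

lemma fold_nxt_N: "x \<in> N \<Longrightarrow> fold (\<lambda>v x. nxt x v) xs x \<in> N"
  by (induction xs arbitrary: x) (auto simp: nxt_N)

lemma st_N: "st h \<in> N" unfolding st_def using fold_nxt_N ro_N by blast

lemma E_reach: "E\<^sup>*\<^sup>* a b \<Longrightarrow> a \<in> V \<Longrightarrow> b \<in> V"
  by (induction rule: rtranclp_induct) (auto dest: EV)

theorem flipper_strategy: "flipper_wins (3 * 2^r) V E"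
  unfolding flipper_wins_def
proof (intro exI[of _ "\<lambda>h. Sep (st h)"] conjI allI impI)
  show "\<And>h. kflip (3 * 2^r) V E (Sep (st h))" using Sep_kflip st_N by blast
  fix v :: "nat \<Rightarrow> 'a"
  let ?\<sigma> = "\<lambda>h. Sep (st h)"
  assume play: "v 0 \<in> V \<and> (\<forall>j. (stage E ?\<sigma> v j)\<^sup>*\<^sup>* (v j) (v (Suc j)))"
  show "\<exists>i\<ge>1. \<not> (\<exists>u. stage E ?\<sigma> v i (v i) u)"
  proof (rule ccontr)
    assume "\<not> ?thesis"
    hence nw: "\<And>i. i \<ge> 1 \<Longrightarrow> \<exists>u. stage E ?\<sigma> v i (v i) u" by auto
    define x where "x i = st (map v [0..<i])" for i
    have xN: "x i \<in> N" for i unfolding x_def by (rule st_N)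
    have xS: "x (Suc i) = nxt (x i) (v i)" if i1: "i \<ge> 1" for i
    proof -
      have ne: "map v [0..<i] \<noteq> []" using i1 by simp
      have "tl (map v [0..<Suc i]) = tl (map v [0..<i]) @ [v i]" using ne by simp
      thus ?thesis unfolding x_def st_def by simp
    qed
    have stg: "stage E ?\<sigma> v i = Sep (x i)" if "i \<ge> 1" for i
      using that by (simp add: stage_def x_def)
    have vV: "v i \<in> V" for i
    proof (induction i)
      case 0 thus ?case using play by simp
    next
      case (Suc i)
      have r: "(stage E ?\<sigma> v i)\<^sup>*\<^sup>* (v i) (v (Suc i))" using play by blast
      show ?case
      proof (cases "i = 0")
        case True
        hence "E\<^sup>*\<^sup>* (v i) (v (Suc i))" using r by (simp add: stage_def)
        thus ?thesis using E_reach Suc.IH by blast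
      next
        case False
        hence "(Sep (x i))\<^sup>*\<^sup>* (v i) (v (Suc i))" using r stg by simp
        thus ?thesis using Sep_reach[OF xN] Suc.IH by blast
      qed
    qed
    have nl: "L (v i) \<noteq> x i" if i1: "i \<ge> 1" for i
    proof
      assume "L (v i) = x i"
      hence "\<not> Sep (x i) (v i) u" for u using Sep_leaf[OF xN vV] by blast
      thus False using nw[OF i1] stg[OF i1] by simp
    qed
    have ok: "T (x i) (x (Suc i)) \<and> L (v i) \<in> NS (x (Suc i)) (x i)" if i1: "i \<ge> 1" for i
      using nxt_ok[OF xN vV nl[OF i1]] xS[OF i1] by simp
    have mv: "L (v (Suc i)) \<in> NS (x (Suc i)) (x i)" if i1: "i \<ge> 1" for i
    proof -
      have "(Sep (x i))\<^sup>*\<^sup>* (v i) (v (Suc i))" using play stg[OF i1] by metis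
      hence "np (x i) (v (Suc i)) = np (x i) (v i)" using Sep_reach[OF xN] vV by blast
      also have "\<dots> = Sx (x (Suc i)) (x i)" using nl[OF i1] xS[OF i1] by (simp add: np_def)
      finally have "v (Suc i) \<in> Sx (x (Suc i)) (x i)" using np_mem[OF xN vV] by metis
      thus ?thesis by (simp add: Sx_def)
    qed
    define f where "f j = card (NS (x (Suc (Suc j))) (x (Suc j)))" for j
    have dec: "f (Suc j) < f j" for j
    proof -
      let ?a = "x (Suc j)" and ?b = "x (Suc (Suc j))" and ?c = "x (Suc (Suc (Suc j)))"
      have ab: "T ?a ?b" using ok[of "Suc j"] by simp
      have bc: "T ?b ?c" and m1: "L (v (Suc (Suc j))) \<in> NS ?c ?b" using ok[of "Suc (Suc j)"] by auto
      have m2: "L (v (Suc (Suc j))) \<in> NS ?b ?a" using mv[of "Suc j"] by simp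
      have "?c \<noteq> ?a"
      proof
        assume "?c = ?a"
        thus False using NS_disj2[OF ab m2] m1 by simp
      qed
      hence "NS ?c ?b \<subset> NS ?b ?a" by (rule NS_dec[OF ab bc])
      moreover have "finite (NS ?b ?a)" using NS_sub[OF ab] finN finite_subset by blast
      ultimately show ?thesis unfolding f_def by (rule psubset_card_mono[rotated])
    qed
    have "f j + j \<le> f 0" for j
    proof (induction j)
      case 0 thus ?case by simp
    next
      case (Suc j) thus ?case using dec[of j] by simp
    qed
    from this[of "Suc (f 0)"] show False by simp
  qed
qed

end

context grph begin

lemma fw_le_rw: "fw V E \<le> 3 * 2^(rw V E)"
proof (cases "card V \<le> 1")
  case True
  have "fw V E \<le> card V" by (rule fw_le[OF fw_exists])
  also have "\<dots> \<le> 3 * 2^(rw V E)" using True by (simp add: rw_def)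
  finally show ?thesis .
next
  case False
  obtain N T L where "rank_decomp V E (3 * fw V E + 1) N T L"
    using decomp_of_fw[OF fw_wins False] by blast
  hence ex: "\<exists>k N T L. rank_decomp V E k N T L" by blast
  have "\<exists>N T L. rank_decomp V E (rw V E) N T L"
    using LeastI_ex[OF ex] False by (simp add: rw_def)
  then obtain N T L where rd: "rank_decomp V E (rw V E) N T L" by blast
  interpret rt: rtree V E "rw V E" N T L by unfold_locales (rule rd)
  show ?thesis by (rule fw_le[OF rt.flipper_strategy])
qed

lemma rw_le_fw': "rw V E \<le> 3 * fw V E + 1"
  by (rule rw_le_fw[OF fw_wins])

end

lemma main_A: "graph V E \<Longrightarrow> rw V E \<le> 3 * fw V E + 1"
  using grph.rw_le_fw'[of V E] by (simp add: grph_def)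

lemma main_B: "graph V E \<Longrightarrow> fw V E \<le> 3 * 2^(rw V E)"
  using grph.fw_le_rw[of V E] by (simp add: grph_def)

theorem mainTheorem5:
  "(\<exists>C::real. \<forall>(V::nat set) E. graph V E \<longrightarrow>
       rw V E \<le> 3 * fw V E + 1 \<and>
       real (3 * fw V E + 1) \<le> C * 2 ^ rw V E + C)
   \<and> (\<forall>\<C> :: (nat set \<times> (nat \<Rightarrow> nat \<Rightarrow> bool)) set.
       (\<forall>G\<in>\<C>. graph (fst G) (snd G)) \<longrightarrow>
       ((\<exists>k. \<forall>G\<in>\<C>. rw (fst G) (snd G) \<le> k) \<longleftrightarrow> (\<exists>k. \<forall>G\<in>\<C>. fw (fst G) (snd G) \<le> k)))"
proof (intro conjI allI impI)
  show "\<exists>C::real. \<forall>(V::nat set) E. graph V E \<longrightarrow>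
       rw V E \<le> 3 * fw V E + 1 \<and> real (3 * fw V E + 1) \<le> C * 2 ^ rw V E + C"
  proof (intro exI[of _ 9] allI impI conjI)
    fix V :: "nat set" and E assume g: "graph V E"
    show "rw V E \<le> 3 * fw V E + 1" by (rule main_A[OF g])
    have "3 * fw V E + 1 \<le> 9 * 2^(rw V E) + 1" using main_B[OF g] by simp
    hence "real (3 * fw V E + 1) \<le> real (9 * 2^(rw V E) + 1)" by (simp only: of_nat_le_iff)
    also have "\<dots> = 9 * 2^(rw V E) + 1" by simp
    also have "\<dots> \<le> 9 * 2^(rw V E) + 9" by simp
    finally show "real (3 * fw V E + 1) \<le> 9 * 2 ^ rw V E + 9" .
  qed
  fix \<C> :: "(nat set \<times> (nat \<Rightarrow> nat \<Rightarrow> bool)) set"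
  assume g: "\<forall>G\<in>\<C>. graph (fst G) (snd G)"
  show "(\<exists>k. \<forall>G\<in>\<C>. rw (fst G) (snd G) \<le> k) \<longleftrightarrow> (\<exists>k. \<forall>G\<in>\<C>. fw (fst G) (snd G) \<le> k)"
  proof
    assume "\<exists>k. \<forall>G\<in>\<C>. rw (fst G) (snd G) \<le> k"
    then obtain k where k: "\<forall>G\<in>\<C>. rw (fst G) (snd G) \<le> k" by blast
    have "\<forall>G\<in>\<C>. fw (fst G) (snd G) \<le> 3 * 2^k"
    proof
      fix G assume G: "G \<in> \<C>"
      have "fw (fst G) (snd G) \<le> 3 * 2^(rw (fst G) (snd G))" using main_B g G by blast
      also have "\<dots> \<le> 3 * 2^k" using k G by (simp add: power_increasing)
      finally show "fw (fst G) (snd G) \<le> 3 * 2^k" .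
    qed
    thus "\<exists>k. \<forall>G\<in>\<C>. fw (fst G) (snd G) \<le> k" by blast
  next
    assume "\<exists>k. \<forall>G\<in>\<C>. fw (fst G) (snd G) \<le> k"
    then obtain k where k: "\<forall>G\<in>\<C>. fw (fst G) (snd G) \<le> k" by blast
    have "\<forall>G\<in>\<C>. rw (fst G) (snd G) \<le> 3 * k + 1"
    proof
      fix G assume G: "G \<in> \<C>"
      have "rw (fst G) (snd G) \<le> 3 * fw (fst G) (snd G) + 1" using main_A g G by blast
      also have "\<dots> \<le> 3 * k + 1" using k G by simp
      finally show "rw (fst G) (snd G) \<le> 3 * k + 1" .
    qed
    thus "\<exists>k. \<forall>G\<in>\<C>. rw (fst G) (snd G) \<le> k" by blast
  qed
qed

end
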